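(* Let $N\ge1$, $q,p,r,s\in\mathbb{C}\setminus\{0\}$ with $q^2\ne1$, $r^2\neq1$. Then $K(\lambda):=K^{\mathrm{tr}}(\lambda,r,s)$ is a solution of the reflection equation for $R(\lambda):=R^{\mathrm{tr}}(\lambda,q,p)$: $$R_{12}(\lambda-\mu)K_1(\lambda)R_{21}(\lambda+\mu)K_2(\mu)=K_2(\mu)R_{12}(\lambda+\mu)K_1(\lambda)R_{21}(\lambda-\mu)$$ for all $\lambda,\mu\in\mathbb{C}$ at which all entries are defined.
   Context: $V=\mathbb{C}^N$ with basis $e_0,\dots,e_{N-1}$; for $A\in\mathrm{End}(V)$, $Ae_j=\sum_k e_k[A]_j^k$; for $R\in\mathrm{End}(V\otimes V)$, $R(e_i\otimes e_j)=\sum_{k,l}[R]_{ij}^{kl}e_k\otimes e_l$. $P$ is the flip, $R_{12}=R$, $R_{21}=PRP$, $K_1=K\otimes I$, $K_2=I\otimes K$. Cremmer–Gervais $R$-matrix with $z=e^{\pi i\lambda}$: $[R^{\mathrm{tr}}(\lambda,q,p)]_{ij}^{kl}=p^{2(j-k)}\times$ - $\frac{qz^{-1}-q^{-1}z}{(q-q^{-1})(z-z^{-1})}$ if $i=j=k=l$; - $-\frac{q^{\mathrm{sgn}(i-j)}}{q-q^{-1}}$ if $i=k\neq j=l$; - $\frac{z^{\mathrm{sgn}(j-i)}}{z-z^{-1}}$ if $l=i\ne k=j$; - $\mathrm{sgn}(j-i)$ if $\min(i,j)<k<\max(i,j)$ and $i+j=k+l$; - $0$ otherwise. $K$-matrix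 with $z=e^{\pi i\lambda}$: $[K^{\mathrm{tr}}(\lambda,r,s)]_j^k=s^{j-k}c_{jk}$ where $c_{jk}=\frac{r^{-1}z^{-2}-rz^2}{(r-r^{-1})(z^2-z^{-2})}$ if $j=k=(N-1)/2$; $c_{jk}=-\frac{z^{2\,\mathrm{sgn}(2j-N+1)}}{z^2-z^{-2}}$ if $j=k\ne(N-1)/2$; $c_{jk}=-\frac{r^{\mathrm{sgn}(2j-N+1)}}{r-r^{-1}}$ if $k=N-1-j\neq j$; $c_{jk}=\mathrm{sgn}(N-1-2j)$ if $\min(j,N-1-j)<k<\max(j,N-1-j)$; $c_{jk}=0$ otherwise. *)

theory Defs
  imports Complex_Main
begin

text \<open>Operators on V (x) V, V = C^N, are represented by their matrix entries:
  A i j k l is the coefficient [A]_{ij}^{kl}, i.e. A(e_i (x) e_j) = sum_{k,l} A i j k l e_k (x) e_l.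
  Operators on V: K j k = [K]_j^k, i.e. K e_j = sum_k e_k [K]_j^k.
  Only indices < N are meaningful.\<close>

definition zeta :: "complex \<Rightarrow> complex" where
  "zeta lam = exp (complex_of_real pi * \<i> * lam)"

definition CG_R :: "complex \<Rightarrow> complex \<Rightarrow> complex \<Rightarrow> nat \<Rightarrow> nat \<Rightarrow> nat \<Rightarrow> nat \<Rightarrow> complex" where
  "CG_R q p lam i j k l =
    (let z = zeta lam in
     p powi (2 * (int j - int k)) *
     (if i = j \<and> j = k \<and> k = l then
        (q * inverse z - inverse q * z) / ((q - inverse q) * (z - inverse z))
      else if i = k \<and> j = l \<and> i \<noteq> j then
        - (q powi sgn (int i - int j)) / (q - inverse q)
      else if l = i \<and> k = j \<and> i \<noteq> k then
        z powi sgn (int j - int i) / (z - inverse z)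
      else if min i j < k \<and> k < max i j \<and> i + j = k + l then
        of_int (sgn (int j - int i))
      else 0))"

definition CG_K :: "nat \<Rightarrow> complex \<Rightarrow> complex \<Rightarrow> complex \<Rightarrow> nat \<Rightarrow> nat \<Rightarrow> complex" where
  "CG_K N r s lam j k =
    (let z = zeta lam; jj = int j; kk = int k; NN = int N in
     s powi (jj - kk) *
     (if j = k \<and> 2 * jj = NN - 1 then
        (inverse r * inverse (z^2) - r * z^2) / ((r - inverse r) * (z^2 - inverse (z^2)))
      else if j = k then
        - (z powi (2 * sgn (2 * jj - NN + 1))) / (z^2 - inverse (z^2))
      else if kk = NN - 1 - jj then
        - (r powi sgn (2 * jj - NN + 1)) / (r - inverse r)
      else if min jj (NN - 1 - jj) < kk \<and> kk < max jj (NN - 1 - jj) then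
        of_int (sgn (NN - 1 - 2 * jj))
      else 0))"

text \<open>Composition A B (first B, then A) of operators on V (x) V.\<close>
definition op_comp :: "nat \<Rightarrow> (nat \<Rightarrow> nat \<Rightarrow> nat \<Rightarrow> nat \<Rightarrow> complex)
    \<Rightarrow> (nat \<Rightarrow> nat \<Rightarrow> nat \<Rightarrow> nat \<Rightarrow> complex) \<Rightarrow> (nat \<Rightarrow> nat \<Rightarrow> nat \<Rightarrow> nat \<Rightarrow> complex)" where
  "op_comp N A B = (\<lambda>i j k l. \<Sum>m<N. \<Sum>n<N. B i j m n * A m n k l)"

text \<open>R_21 = P R P.\<close>
definition op21 :: "(nat \<Rightarrow> nat \<Rightarrow> nat \<Rightarrow> nat \<Rightarrow> complex) \<Rightarrow> (nat \<Rightarrow> nat \<Rightarrow> nat \<Rightarrow> nat \<Rightarrow> complex)" where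
  "op21 A = (\<lambda>i j k l. A j i l k)"

text \<open>K_1 = K (x) I and K_2 = I (x) K.\<close>
definition op1 :: "(nat \<Rightarrow> nat \<Rightarrow> complex) \<Rightarrow> (nat \<Rightarrow> nat \<Rightarrow> nat \<Rightarrow> nat \<Rightarrow> complex)" where
  "op1 K = (\<lambda>i j k l. K i k * (if j = l then 1 else 0))"

definition op2 :: "(nat \<Rightarrow> nat \<Rightarrow> complex) \<Rightarrow> (nat \<Rightarrow> nat \<Rightarrow> nat \<Rightarrow> nat \<Rightarrow> complex)" where
  "op2 K = (\<lambda>i j k l. (if i = k then 1 else 0) * K j l)"

end

theory Submission
  imports Defs "HOL-Computational_Algebra.Polynomial"
begin

definition ev :: "nat \<Rightarrow> (nat \<Rightarrow> nat \<Rightarrow> complex) \<Rightarrow> complex \<Rightarrow> complex \<Rightarrow> complex" where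
  "ev N c x y = (\<Sum>k<N. \<Sum>l<N. c k l * x^k * y^l)"

definition act :: "nat \<Rightarrow> (nat \<Rightarrow> nat \<Rightarrow> nat \<Rightarrow> nat \<Rightarrow> complex) \<Rightarrow> (nat \<Rightarrow> nat \<Rightarrow> complex) \<Rightarrow> (nat \<Rightarrow> nat \<Rightarrow> complex)" where
  "act N A c = (\<lambda>k l. \<Sum>i<N. \<Sum>j<N. c i j * A i j k l)"

lemma act_comp: "act N (op_comp N A B) c = act N A (act N B c)"
proof (rule ext, rule ext)
  fix k l
  have "act N (op_comp N A B) c k l = (\<Sum>i<N. \<Sum>j<N. \<Sum>m<N. \<Sum>n<N. c i j * B i j m n * A m n k l)"
    by (simp add: act_def op_comp_def sum_distrib_left mult.assoc)
  also have "\<dots> = (\<Sum>i<N. \<Sum>m<N. \<Sum>j<N. \<Sum>n<N. c i j * B i j m n * A m n k l)"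
    by (rule sum.cong[OF refl], rule sum.swap)
  also have "\<dots> = (\<Sum>m<N. \<Sum>i<N. \<Sum>j<N. \<Sum>n<N. c i j * B i j m n * A m n k l)"
    by (rule sum.swap)
  also have "\<dots> = (\<Sum>m<N. \<Sum>i<N. \<Sum>n<N. \<Sum>j<N. c i j * B i j m n * A m n k l)"
    by (rule sum.cong[OF refl], rule sum.cong[OF refl], rule sum.swap)
  also have "\<dots> = (\<Sum>m<N. \<Sum>n<N. \<Sum>i<N. \<Sum>j<N. c i j * B i j m n * A m n k l)"
    by (rule sum.cong[OF refl], rule sum.swap)
  also have "\<dots> = act N A (act N B c) k l"
    by (simp add: act_def sum_distrib_right)
  finally show "act N (op_comp N A B) c k l = act N A (act N B c) k l" .
qed

lemma ev_act: "ev N (act N A c) x y = (\<Sum>i<N. \<Sum>j<N. c i j * (\<Sum>k<N. \<Sum>l<N. A i j k l * x^k * y^l))"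
proof -
  have "ev N (act N A c) x y = (\<Sum>k<N. \<Sum>l<N. \<Sum>i<N. \<Sum>j<N. c i j * A i j k l * x^k * y^l)"
    by (simp add: ev_def act_def sum_distrib_right)
  also have "\<dots> = (\<Sum>k<N. \<Sum>i<N. \<Sum>l<N. \<Sum>j<N. c i j * A i j k l * x^k * y^l)"
    by (rule sum.cong[OF refl], rule sum.swap)
  also have "\<dots> = (\<Sum>i<N. \<Sum>k<N. \<Sum>l<N. \<Sum>j<N. c i j * A i j k l * x^k * y^l)"
    by (rule sum.swap)
  also have "\<dots> = (\<Sum>i<N. \<Sum>k<N. \<Sum>j<N. \<Sum>l<N. c i j * A i j k l * x^k * y^l)"
    by (rule sum.cong[OF refl], rule sum.cong[OF refl], rule sum.swap)
  also have "\<dots> = (\<Sum>i<N. \<Sum>j<N. \<Sum>k<N. \<Sum>l<N. c i j * A i j k l * x^k * y^l)"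
    by (rule sum.cong[OF refl], rule sum.swap)
  also have "\<dots> = (\<Sum>i<N. \<Sum>j<N. c i j * (\<Sum>k<N. \<Sum>l<N. A i j k l * x^k * y^l))"
    by (simp add: sum_distrib_left mult.assoc)
  finally show ?thesis .
qed

lemma ev_mono: "ev N c u v = (\<Sum>i<N. \<Sum>j<N. c i j * (u^i * v^j))"
  by (simp add: ev_def mult.assoc)

lemma tele:
  fixes u y :: complex
  assumes "i \<le> j"
  shows "(u - y) * (\<Sum>k=Suc i..j. u^k * y^(i+j-k)) = u^(j+1)*y^i - u^(i+1)*y^j"
  using assms
proof (induction j rule: dec_induct)
  case base
  then show ?case by simp
next
  case (step j)
  have "(\<Sum>k=Suc i..Suc j. u^k * y^(i+Suc j-k)) = (\<Sum>k=Suc i..j. u^k * y^(i+Suc j-k)) + u^(Suc j) * y^i"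
    using step by (simp add: sum.cl_ivl_Suc)
  also have "(\<Sum>k=Suc i..j. u^k * y^(i+Suc j-k)) = y * (\<Sum>k=Suc i..j. u^k * y^(i+j-k))"
    unfolding sum_distrib_left
  proof (rule sum.cong[OF refl])
    fix k assume "k \<in> {Suc i..j}"
    then have "i + Suc j - k = Suc (i + j - k)" by auto
    then show "u^k * y^(i+Suc j-k) = y * (u^k * y^(i+j-k))" by simp
  qed
  finally have "(u - y) * (\<Sum>k=Suc i..Suc j. u^k * y^(i+Suc j-k))
      = y * ((u - y) * (\<Sum>k=Suc i..j. u^k * y^(i+j-k))) + (u - y) * u^(Suc j) * y^i"
    by (simp add: algebra_simps)
  also have "\<dots> = y * (u^(j+1)*y^i - u^(i+1)*y^j) + (u - y) * u^(Suc j) * y^i"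
    using step by simp
  also have "\<dots> = u^(Suc j+1)*y^i - u^(i+1)*y^(Suc j)"
    by (simp add: algebra_simps)
  finally show ?case .
qed

definition aq :: "complex \<Rightarrow> complex" where "aq q = - inverse q / (q - inverse q)"
definition bz :: "complex \<Rightarrow> complex" where "bz z = inverse z / (z - inverse z)"
definition Rdel :: "nat \<Rightarrow> nat \<Rightarrow> nat \<Rightarrow> nat \<Rightarrow> complex" where
  "Rdel i j k l = (if i<j \<and> i<k \<and> k\<le>j \<and> k+l=i+j then 1 else if j<i \<and> j<k \<and> k\<le>i \<and> k+l=i+j then -1 else 0)"

lemma R_decomp:
  assumes "q \<noteq> 0" "q - inverse q \<noteq> 0" "z \<noteq> 0" "z - inverse z \<noteq> 0" "z = zeta lam"
  shows "CG_R q p lam i j k l = p powi (2*(int j - int k)) *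
     (aq q * (if k=i \<and> l=j then 1 else 0) + bz z * (if k=j \<and> l=i then 1 else 0) + Rdel i j k l)"
proof -
  have A: "- (q powi 1) / (q - inverse q) = aq q - 1" "- (q powi (-1)) / (q - inverse q) = aq q"
    using assms by (auto simp: aq_def field_simps power_int_minus)
  have B: "z powi 1 / (z - inverse z) = bz z + 1" "z powi (-1) / (z - inverse z) = bz z"
    using assms by (auto simp: bz_def field_simps power_int_minus)
  have q1: "q - inverse q = (q*q - 1)/q" and z1: "z - inverse z = (z*z - 1)/z"
    using assms by (simp_all add: field_simps)
  have q2: "q*q - 1 \<noteq> 0" and z2: "z*z - 1 \<noteq> 0"
    using assms q1 z1 by auto
  have C: "(q * inverse z - inverse q * z) / ((q - inverse q) * (z - inverse z)) = aq q + bz z"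
    unfolding aq_def bz_def q1 z1 using assms(1,3) q2 z2
    by (simp add: divide_simps)
  show ?thesis
    unfolding CG_R_def Let_def Rdel_def assms(5)[symmetric]
    using A B C by (auto simp: sgn_if)
qed

lemma sum_if_sub:
  fixes g :: "nat \<Rightarrow> complex"
  assumes "A \<subseteq> {..<N}"
  shows "(\<Sum>k<N. if k \<in> A then g k else 0) = sum g A"
proof -
  have "(\<Sum>k<N. if k \<in> A then g k else 0) = sum g ({..<N} \<inter> A)"
    by (simp add: sum.inter_restrict)
  also have "{..<N} \<inter> A = A" using assms by auto
  finally show ?thesis .
qed

lemma Rdel_inner:
  fixes u y :: complex
  assumes "i < N" "j < N"
  shows "(\<Sum>l<N. Rdel i j k l * (u^k * y^l)) =
     (if k \<in> {Suc i..j} then u^k * y^(i+j-k) else 0) - (if k \<in> {Suc j..i} then u^k * y^(j+i-k) else 0)"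
proof -
  have "(\<Sum>l<N. Rdel i j k l * (u^k * y^l)) = (\<Sum>l<N. (if k \<in> {Suc i..j} \<and> l = i+j-k then u^k * y^l else 0)
      - (if k \<in> {Suc j..i} \<and> l = j+i-k then u^k * y^l else 0))"
    by (rule sum.cong[OF refl]) (auto simp: Rdel_def)
  also have "\<dots> = (\<Sum>l<N. (if k \<in> {Suc i..j} \<and> l = i+j-k then u^k * y^l else 0))
      - (\<Sum>l<N. (if k \<in> {Suc j..i} \<and> l = j+i-k then u^k * y^l else 0))"
    by (simp add: sum_subtractf)
  also have "(\<Sum>l<N. (if k \<in> {Suc i..j} \<and> l = i+j-k then u^k * y^l else 0)) =
       (if k \<in> {Suc i..j} then u^k * y^(i+j-k) else 0)"
    using assms by (cases "k \<in> {Suc i..j}") (auto simp: sum.delta')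
  also have "(\<Sum>l<N. (if k \<in> {Suc j..i} \<and> l = j+i-k then u^k * y^l else 0)) =
       (if k \<in> {Suc j..i} then u^k * y^(j+i-k) else 0)"
    using assms by (cases "k \<in> {Suc j..i}") (auto simp: sum.delta')
  finally show ?thesis .
qed

lemma Rdel_sum:
  fixes u y :: complex
  assumes "i < N" "j < N"
  shows "(u - y) * (\<Sum>k<N. \<Sum>l<N. Rdel i j k l * (u^k * y^l)) = u^(j+1)*y^i - u^(i+1)*y^j"
proof -
  have "(\<Sum>k<N. \<Sum>l<N. Rdel i j k l * (u^k * y^l)) =
     (\<Sum>k<N. if k \<in> {Suc i..j} then u^k * y^(i+j-k) else 0) - (\<Sum>k<N. if k \<in> {Suc j..i} then u^k * y^(j+i-k) else 0)"
    using assms by (simp add: Rdel_inner sum_subtractf)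
  also have "\<dots> = (\<Sum>k=Suc i..j. u^k * y^(i+j-k)) - (\<Sum>k=Suc j..i. u^k * y^(j+i-k))"
  proof -
    have "{Suc i..j} \<subseteq> {..<N}" "{Suc j..i} \<subseteq> {..<N}" using assms by auto
    then show ?thesis by (simp only: sum_if_sub)
  qed
  finally have E: "(\<Sum>k<N. \<Sum>l<N. Rdel i j k l * (u^k * y^l)) = (\<Sum>k=Suc i..j. u^k * y^(i+j-k)) - (\<Sum>k=Suc j..i. u^k * y^(j+i-k))" .
  show ?thesis
  proof (cases "i \<le> j")
    case True
    have "(\<Sum>k=Suc j..i. u^k * y^(j+i-k)) = 0"
      using True by (cases "i = j") auto
    then show ?thesis using E tele[OF True, of u y] by simp
  next
    case False
    then have "j \<le> i" by simp
    moreover have "{Suc i..j} = {}" using False by auto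
    ultimately show ?thesis using E tele[of j i u y] by (simp add: algebra_simps)
  qed
qed

definition RA :: "complex \<Rightarrow> complex \<Rightarrow> complex \<Rightarrow> complex \<Rightarrow> complex" where
  "RA a P u v = a - (u/P)/(u/P - v)"
definition RB :: "complex \<Rightarrow> complex \<Rightarrow> complex \<Rightarrow> complex \<Rightarrow> complex" where
  "RB b P u v = b + (u/P)/(u/P - v)"

lemma if01_mult: "(if P then 1 else 0) * (w::complex) = (if P then w else 0)" by simp

lemma ind_sum:
  fixes f :: "nat \<Rightarrow> nat \<Rightarrow> complex"
  assumes "i < N" "j < N"
  shows "(\<Sum>k<N. \<Sum>l<N. (if k=i \<and> l=j then 1 else 0) * f k l) = f i j"
proof -
  have "(\<Sum>k<N. \<Sum>l<N. (if k=i \<and> l=j then 1 else 0) * f k l) = (\<Sum>k<N. if k = i then f k j else 0)"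
    by (rule sum.cong[OF refl]) (use assms in \<open>auto simp: sum.delta if01_mult\<close>)
  also have "\<dots> = f i j" using assms by (simp add: sum.delta)
  finally show ?thesis .
qed

lemma powi_shift:
  fixes p x :: complex
  assumes "p \<noteq> 0"
  shows "p powi (2*(int j - int k)) * x^k = p^(2*j) * (x/p^2)^k"
proof -
  have "2*(int j - int k) = int (2*j) - int (2*k)" by simp
  then have "p powi (2*(int j - int k)) = p powi (int (2*j) - int (2*k))" by (simp only:)
  also have "\<dots> = p powi (int (2*j)) / p powi (int (2*k))"
    by (rule power_int_diff) (use assms in simp)
  finally have "p powi (2*(int j - int k)) = p powi (int (2*j)) / p powi (int (2*k))" .
  then have E: "p powi (2*(int j - int k)) = p^(2*j) / p^(2*k)"
    by (simp only: power_int_of_nat)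
  have F: "(x/p^2)^k = x^k / p^(2*k)" by (simp add: power_divide power_mult)
  show ?thesis by (simp only: E F times_divide_eq_left times_divide_eq_right)
qed

lemma Rsum:
  fixes x y :: complex
  assumes "i<N" "j<N" "q \<noteq> 0" "q - inverse q \<noteq> 0" "zeta lam - inverse (zeta lam) \<noteq> 0" "p \<noteq> 0" "x/p^2 \<noteq> y"
  shows "(\<Sum>k<N. \<Sum>l<N. CG_R q p lam i j k l * x^k * y^l) =
     RA (aq q) (p^2) x y * ((x/p^2)^i * (p^2*y)^j) + RB (bz (zeta lam)) (p^2) x y * (y^i * x^j)"
proof -
  define u where "u = x/p^2"
  have xu: "x = p^2 * u" using assms(6) by (simp add: u_def)
  have z0: "zeta lam \<noteq> 0" by (simp add: zeta_def)
  have uy: "u - y \<noteq> 0" using assms(7) by (simp add: u_def)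
  have "(\<Sum>k<N. \<Sum>l<N. CG_R q p lam i j k l * x^k * y^l) =
     (\<Sum>k<N. \<Sum>l<N. p^(2*j) * ((aq q * (if k=i \<and> l=j then 1 else 0) + bz (zeta lam) * (if k=j \<and> l=i then 1 else 0) + Rdel i j k l) * (u^k * y^l)))"
  proof (intro sum.cong refl)
    fix k l
    define D where "D = aq q * (if k=i \<and> l=j then 1 else 0) + bz (zeta lam) * (if k=j \<and> l=i then 1 else 0) + Rdel i j k l"
    have "CG_R q p lam i j k l * x^k * y^l = (p powi (2*(int j - int k)) * x^k) * D * y^l"
      unfolding D_def by (subst R_decomp[OF assms(3,4) z0 assms(5) refl]) (simp only: mult_ac)
    also have "\<dots> = p^(2*j) * u^k * D * y^l"
      by (simp only: powi_shift[OF assms(6)] u_def)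
    also have "\<dots> = p^(2*j) * (D * (u^k * y^l))" by (simp only: mult_ac)
    finally show "CG_R q p lam i j k l * x^k * y^l = p^(2*j) * ((aq q * (if k=i \<and> l=j then 1 else 0) + bz (zeta lam) * (if k=j \<and> l=i then 1 else 0) + Rdel i j k l) * (u^k * y^l))"
      unfolding D_def .
  qed
  also have "\<dots> = p^(2*j) * (aq q * (\<Sum>k<N. \<Sum>l<N. (if k=i \<and> l=j then 1 else 0) * (u^k * y^l))
      + bz (zeta lam) * (\<Sum>k<N. \<Sum>l<N. (if k=j \<and> l=i then 1 else 0) * (u^k * y^l))
      + (\<Sum>k<N. \<Sum>l<N. Rdel i j k l * (u^k * y^l)))"
    by (simp only: sum_distrib_left[symmetric] sum.distrib distrib_right mult.assoc)
  also have "\<dots> = p^(2*j) * (aq q * (u^i * y^j) + bz (zeta lam) * (u^j * y^i)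
      + (u^(j+1)*y^i - u^(i+1)*y^j) / (u - y))"
  proof -
    have S: "(\<Sum>k<N. \<Sum>l<N. Rdel i j k l * (u^k * y^l)) = (u^(j+1)*y^i - u^(i+1)*y^j) / (u - y)"
      using Rdel_sum[OF assms(1,2), of u y] uy by (simp add: eq_divide_eq mult.commute)
    show ?thesis by (simp only: ind_sum[OF assms(1,2)] ind_sum[OF assms(2,1)] S)
  qed
  also have "\<dots> = RA (aq q) (p^2) x y * ((x/p^2)^i * (p^2*y)^j) + RB (bz (zeta lam)) (p^2) x y * (y^i * x^j)"
    unfolding RA_def RB_def u_def[symmetric] using uy assms(6)
    by (simp add: xu divide_simps power_mult_distrib power_mult) (simp add: algebra_simps)
  finally show ?thesis .
qed

lemma ev_R:
  assumes "q \<noteq> 0" "q - inverse q \<noteq> 0" "zeta lam - inverse (zeta lam) \<noteq> 0" "p \<noteq> 0" "x/p^2 \<noteq> y"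
    and "u = x/p^2" "v = p^2*y"
  shows "ev N (act N (CG_R q p lam) c) x y = RA (aq q) (p^2) x y * ev N c u v + RB (bz (zeta lam)) (p^2) x y * ev N c y x"
proof -
  have "ev N (act N (CG_R q p lam) c) x y = (\<Sum>i<N. \<Sum>j<N. c i j * (RA (aq q) (p^2) x y * (u^i * v^j) + RB (bz (zeta lam)) (p^2) x y * (y^i * x^j)))"
    unfolding ev_act by (intro sum.cong refl) (simp add: Rsum[OF _ _ assms(1-5)] assms(6,7))
  also have "\<dots> = RA (aq q) (p^2) x y * ev N c u v + RB (bz (zeta lam)) (p^2) x y * ev N c y x"
    unfolding ev_mono by (simp add: sum_distrib_left sum.distrib algebra_simps)
  finally show ?thesis .
qed

lemma ev_R21:
  assumes "q \<noteq> 0" "q - inverse q \<noteq> 0" "zeta lam - inverse (zeta lam) \<noteq> 0" "p \<noteq> 0" "y/p^2 \<noteq> x"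
    and "u = p^2*x" "v = y/p^2"
  shows "ev N (act N (op21 (CG_R q p lam)) c) x y = RA (aq q) (p^2) y x * ev N c u v + RB (bz (zeta lam)) (p^2) y x * ev N c y x"
proof -
  have "ev N (act N (op21 (CG_R q p lam)) c) x y = (\<Sum>i<N. \<Sum>j<N. c i j * (\<Sum>l<N. \<Sum>k<N. CG_R q p lam j i l k * y^l * x^k))"
    unfolding ev_act op21_def
  proof (intro sum.cong refl)
    fix i j
    show "c i j * (\<Sum>k<N. \<Sum>l<N. CG_R q p lam j i l k * x ^ k * y ^ l) = c i j * (\<Sum>l<N. \<Sum>k<N. CG_R q p lam j i l k * y^l * x^k)"
      by (subst sum.swap) (simp add: mult_ac)
  qed
  also have "\<dots> = (\<Sum>i<N. \<Sum>j<N. c i j * (RA (aq q) (p^2) y x * (u^i * v^j) + RB (bz (zeta lam)) (p^2) y x * (y^i * x^j)))"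
    by (intro sum.cong refl) (subst Rsum[OF _ _ assms(1-5)], simp_all add: assms(6,7) mult_ac)
  also have "\<dots> = RA (aq q) (p^2) y x * ev N c u v + RB (bz (zeta lam)) (p^2) y x * ev N c y x"
    unfolding ev_mono by (simp add: sum_distrib_left sum.distrib algebra_simps)
  finally show ?thesis .
qed

definition alK :: "complex \<Rightarrow> complex" where "alK z = - inverse (z^2) / (z^2 - inverse (z^2))"
definition beK :: "complex \<Rightarrow> complex" where "beK r = - r / (r - inverse r)"
definition Kdel :: "nat \<Rightarrow> nat \<Rightarrow> nat \<Rightarrow> complex" where
  "Kdel n j k = (if j < n - j \<and> j < k \<and> k \<le> n - j then 1 else if n - j < j \<and> n - j < k \<and> k \<le> j then -1 else 0)"
definition KC :: "complex \<Rightarrow> complex \<Rightarrow> complex \<Rightarrow> complex" where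
  "KC al s u = al + (u/s)/(1 - u/s)"
definition KD :: "complex \<Rightarrow> complex \<Rightarrow> nat \<Rightarrow> complex \<Rightarrow> complex" where
  "KD be s n u = (u/s)^n * (be - (u/s)/(1 - u/s))"

lemma K_decomp:
  assumes "j < N" "r \<noteq> 0" "r - inverse r \<noteq> 0" "z \<noteq> 0" "z^2 - inverse (z^2) \<noteq> 0" "z = zeta lam"
  shows "CG_K N r s lam j k = s powi (int j - int k) *
     (alK z * (if k = j then 1 else 0) + beK r * (if k = N - 1 - j then 1 else 0) + Kdel (N-1) j k)"
proof -
  have A: "- (r powi 1) / (r - inverse r) = beK r" "- (r powi (-1)) / (r - inverse r) = beK r + 1"
    using assms by (auto simp: beK_def field_simps power_int_minus)
  have r1: "r - inverse r = (r*r - 1)/r" and z1: "z^2 - inverse (z^2) = (z^2*z^2 - 1)/z^2"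
    using assms by (simp_all add: field_simps)
  have r2: "r*r - 1 \<noteq> 0" and z2: "z^2*z^2 - 1 \<noteq> 0"
    using assms r1 z1 by auto
  have B: "- (z powi (2 * 1)) / (z^2 - inverse (z^2)) = alK z - 1" "- (z powi (2 * -1)) / (z^2 - inverse (z^2)) = alK z"
    unfolding alK_def z1 using assms(4) z2
    by (simp_all add: divide_simps power_int_minus power2_eq_square)
  have C: "(inverse r * inverse (z^2) - r * z^2) / ((r - inverse r) * (z^2 - inverse (z^2))) = alK z + beK r"
    unfolding alK_def beK_def r1 z1 using assms(2,4) r2 z2
    by (simp add: divide_simps) (simp add: algebra_simps power2_eq_square power4_eq_xxxx)
  have I1: "(2 * int j = int N - 1) = (2*j = N-1)" using assms(1) by linarith
  have I2: "\<And>k. (int k = int N - 1 - int j) = (k = N-1-j)" using assms(1) by linarith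
  have I3: "sgn (2 * int j - int N + 1) = (if 2*j < N-1 then -1 else if 2*j = N-1 then 0 else 1)"
    using assms(1) by (simp add: sgn_if) linarith
  have I4: "\<And>k. (min (int j) (int N - 1 - int j) < int k \<and> int k < max (int j) (int N - 1 - int j)) =
      (min j (N-1-j) < k \<and> k < max j (N-1-j))"
    using assms(1) by (auto simp: min_def max_def) 
  have I5: "sgn (int N - 1 - 2 * int j) = (if 2*j < N-1 then 1 else if 2*j = N-1 then 0 else -1)"
    using assms(1) by (simp add: sgn_if) linarith
  have V: "CG_K N r s lam j k = s powi (int j - int k) *
     (if k = j \<and> 2*j = N-1 then alK z + beK r
      else if k = j then (if 2*j < N-1 then alK z else alK z - 1)
      else if k = N-1-j then (if 2*j < N-1 then beK r + 1 else beK r)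
      else if min j (N-1-j) < k \<and> k < max j (N-1-j) then (if 2*j < N-1 then 1 else -1)
      else 0)"
  proof (cases "2*j = N-1")
    case True
    then have "N - 1 - j = j" by simp
    then show ?thesis unfolding CG_K_def Let_def assms(6)[symmetric] I1 I2 I3 I4 I5 using A B C True by simp
  next
    case False
    then show ?thesis unfolding CG_K_def Let_def assms(6)[symmetric] I1 I2 I3 I4 I5 using A B C by simp
  qed
  show ?thesis
    unfolding V Kdel_def using assms(1)
    by (cases "k = j"; cases "2*j < N-1"; cases "2*j = N-1"; cases "k = N-1-j"; auto simp: min_def max_def)
qed

lemma tele1:
  fixes w :: complex
  assumes "a \<le> b"
  shows "(w - 1) * (\<Sum>k=Suc a..b. w^k) = w^(b+1) - w^(a+1)"
  using tele[OF assms, of w 1] by simp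

lemma Kdel_sum:
  fixes w :: complex
  assumes "j < N"
  shows "(w - 1) * (\<Sum>k<N. Kdel (N-1) j k * w^k) = w^(N-1-j+1) - w^(j+1)"
proof -
  have "(\<Sum>k<N. Kdel (N-1) j k * w^k) = (\<Sum>k<N. (if k \<in> {Suc j..N-1-j} then w^k else 0) - (if k \<in> {Suc (N-1-j)..j} then w^k else 0))"
    by (rule sum.cong[OF refl]) (auto simp: Kdel_def)
  also have "\<dots> = (\<Sum>k<N. if k \<in> {Suc j..N-1-j} then w^k else 0) - (\<Sum>k<N. if k \<in> {Suc (N-1-j)..j} then w^k else 0)"
    by (simp only: sum_subtractf)
  also have "\<dots> = (\<Sum>k=Suc j..N-1-j. w^k) - (\<Sum>k=Suc (N-1-j)..j. w^k)"
  proof -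
    have "{Suc j..N-1-j} \<subseteq> {..<N}" "{Suc (N-1-j)..j} \<subseteq> {..<N}" using assms by auto
    then show ?thesis by (simp only: sum_if_sub)
  qed
  finally have E: "(\<Sum>k<N. Kdel (N-1) j k * w^k) = (\<Sum>k=Suc j..N-1-j. w^k) - (\<Sum>k=Suc (N-1-j)..j. w^k)" .
  show ?thesis
  proof (cases "j \<le> N-1-j")
    case True
    have "(\<Sum>k=Suc (N-1-j)..j. w^k) = 0" using True by simp
    then show ?thesis using E tele1[OF True, of w] by (simp add: right_diff_distrib)
  next
    case False
    then have "N-1-j \<le> j" by simp
    moreover have "(\<Sum>k=Suc j..N-1-j. w^k) = 0" using False by simp
    ultimately show ?thesis using E tele1[of "N-1-j" j w] by (simp add: right_diff_distrib)
  qed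
qed

lemma powi_shift1:
  fixes s x :: complex
  assumes "s \<noteq> 0"
  shows "s powi (int j - int k) * x^k = s^j * (x/s)^k"
proof -
  have E: "s powi (int j - int k) = s^j / s^k"
    using assms by (simp add: power_int_diff)
  show ?thesis by (simp only: E power_divide times_divide_eq_left times_divide_eq_right)
qed

lemma Ksum:
  fixes x :: complex
  assumes "j < N" "r \<noteq> 0" "r - inverse r \<noteq> 0" "(zeta lam)^2 - inverse ((zeta lam)^2) \<noteq> 0"
    and "s \<noteq> 0" "x \<noteq> 0" "x/s \<noteq> 1"
  shows "(\<Sum>k<N. CG_K N r s lam j k * x^k) = KC (alK (zeta lam)) s x * x^j + KD (beK r) s (N-1) x * (s^2/x)^j"
proof -
  define w where "w = x/s"
  have xw: "x = s * w" using assms(5) by (simp add: w_def)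
  have w0: "w \<noteq> 0" using assms(5,6) by (simp add: w_def)
  have w1: "w - 1 \<noteq> 0" using assms(7) by (simp add: w_def)
  have z0: "zeta lam \<noteq> 0" by (simp add: zeta_def)
  have "(\<Sum>k<N. CG_K N r s lam j k * x^k) =
     (\<Sum>k<N. s^j * ((alK (zeta lam) * (if k = j then 1 else 0) + beK r * (if k = N - 1 - j then 1 else 0) + Kdel (N-1) j k) * w^k))"
  proof (rule sum.cong[OF refl])
    fix k
    define D where "D = alK (zeta lam) * (if k = j then 1 else 0) + beK r * (if k = N - 1 - j then 1 else 0) + Kdel (N-1) j k"
    have "CG_K N r s lam j k * x^k = (s powi (int j - int k) * x^k) * D"
      unfolding D_def by (subst K_decomp[OF assms(1-3) z0 assms(4) refl]) (simp only: mult_ac)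
    also have "\<dots> = s^j * (D * w^k)"
      by (simp only: powi_shift1[OF assms(5)] w_def) (simp only: mult_ac)
    finally show "CG_K N r s lam j k * x^k = s^j * ((alK (zeta lam) * (if k = j then 1 else 0) + beK r * (if k = N - 1 - j then 1 else 0) + Kdel (N-1) j k) * w^k)"
      unfolding D_def .
  qed
  also have "\<dots> = s^j * (alK (zeta lam) * (\<Sum>k<N. (if k = j then 1 else 0) * w^k)
      + beK r * (\<Sum>k<N. (if k = N-1-j then 1 else 0) * w^k) + (\<Sum>k<N. Kdel (N-1) j k * w^k))"
    by (simp only: sum_distrib_left[symmetric] sum.distrib distrib_right mult.assoc)
  also have "\<dots> = s^j * (alK (zeta lam) * w^j + beK r * w^(N-1-j) + (w^(N-1-j+1) - w^(j+1)) / (w - 1))"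
  proof -
    have S: "(\<Sum>k<N. Kdel (N-1) j k * w^k) = (w^(N-1-j+1) - w^(j+1)) / (w - 1)"
      using Kdel_sum[OF assms(1), of w] w1 by (simp add: eq_divide_eq mult.commute)
    have I1: "(\<Sum>k<N. (if k = j then 1 else 0) * w^k) = w^j" using assms(1) by (simp add: if01_mult sum.delta)
    have I2: "(\<Sum>k<N. (if k = N-1-j then 1 else 0) * w^k) = w^(N-1-j)" using assms(1) by (simp add: if01_mult sum.delta)
    show ?thesis by (simp only: S I1 I2)
  qed
  also have "\<dots> = KC (alK (zeta lam)) s x * x^j + KD (beK r) s (N-1) x * (s^2/x)^j"
  proof -
    define m where "m = N - 1 - j"
    have Nm: "N - 1 = m + j" using assms(1) by (simp add: m_def)
    show ?thesis
      unfolding KC_def KD_def w_def[symmetric] m_def[symmetric] Nm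
      using w0 w1 assms(5)
      by (simp add: xw divide_simps power_mult_distrib power_add) (simp add: algebra_simps power2_eq_square power_mult_distrib)
  qed
  finally show ?thesis .
qed

lemma mult_if01: "(a::complex) * (if P then 1 else 0) = (if P then a else 0)" by simp
lemma if0_mult: "(if P then a else 0) * (b::complex) = (if P then a * b else 0)" by simp

lemma ev_K1:
  assumes "r \<noteq> 0" "r - inverse r \<noteq> 0" "(zeta lam)^2 - inverse ((zeta lam)^2) \<noteq> 0"
    and "s \<noteq> 0" "x \<noteq> 0" "x/s \<noteq> 1" "x' = s^2/x"
  shows "ev N (act N (op1 (CG_K N r s lam)) c) x y =
    KC (alK (zeta lam)) s x * ev N c x y + KD (beK r) s (N-1) x * ev N c x' y"
proof -
  have "ev N (act N (op1 (CG_K N r s lam)) c) x y =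
     (\<Sum>i<N. \<Sum>j<N. c i j * ((\<Sum>k<N. CG_K N r s lam i k * x^k) * y^j))"
    unfolding ev_act op1_def
  proof (intro sum.cong refl)
    fix i j assume "j \<in> {..<N}"
    then have "(\<Sum>k<N. \<Sum>l<N. CG_K N r s lam i k * (if j = l then 1 else 0) * x ^ k * y ^ l)
        = (\<Sum>k<N. CG_K N r s lam i k * x^k * y^j)"
      by (intro sum.cong refl) (simp add: mult_if01 if0_mult sum.delta sum.delta')
    also have "\<dots> = (\<Sum>k<N. CG_K N r s lam i k * x^k) * y^j" by (simp add: sum_distrib_right)
    finally show "c i j * (\<Sum>k<N. \<Sum>l<N. CG_K N r s lam i k * (if j = l then 1 else 0) * x ^ k * y ^ l)
        = c i j * ((\<Sum>k<N. CG_K N r s lam i k * x^k) * y^j)" by simp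
  qed
  also have "\<dots> = (\<Sum>i<N. \<Sum>j<N. c i j * ((KC (alK (zeta lam)) s x * x^i + KD (beK r) s (N-1) x * x'^i) * y^j))"
    by (intro sum.cong refl) (simp add: Ksum[OF _ assms(1-6)] assms(7))
  also have "\<dots> = KC (alK (zeta lam)) s x * ev N c x y + KD (beK r) s (N-1) x * ev N c x' y"
    unfolding ev_mono by (simp add: sum_distrib_left sum.distrib algebra_simps)
  finally show ?thesis .
qed

lemma ev_K2:
  assumes "r \<noteq> 0" "r - inverse r \<noteq> 0" "(zeta lam)^2 - inverse ((zeta lam)^2) \<noteq> 0"
    and "s \<noteq> 0" "y \<noteq> 0" "y/s \<noteq> 1" "y' = s^2/y"
  shows "ev N (act N (op2 (CG_K N r s lam)) c) x y =
    KC (alK (zeta lam)) s y * ev N c x y + KD (beK r) s (N-1) y * ev N c x y'"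
proof -
  have "ev N (act N (op2 (CG_K N r s lam)) c) x y =
     (\<Sum>i<N. \<Sum>j<N. c i j * (x^i * (\<Sum>l<N. CG_K N r s lam j l * y^l)))"
    unfolding ev_act op2_def
  proof (intro sum.cong refl)
    fix i j assume "i \<in> {..<N}"
    then have P: "\<And>l. (\<Sum>k<N. (if i = k then 1 else 0) * CG_K N r s lam j l * x ^ k * y ^ l) = x^i * (CG_K N r s lam j l * y^l)"
      by (simp add: if01_mult if0_mult sum.delta sum.delta', (simp add: mult_ac)?)
    have "(\<Sum>k<N. \<Sum>l<N. (if i = k then 1 else 0) * CG_K N r s lam j l * x ^ k * y ^ l)
        = (\<Sum>l<N. x^i * (CG_K N r s lam j l * y^l))"
      by (subst sum.swap) (simp only: P)
    also have "\<dots> = x^i * (\<Sum>l<N. CG_K N r s lam j l * y^l)" by (simp add: sum_distrib_left)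
    finally show "c i j * (\<Sum>k<N. \<Sum>l<N. (if i = k then 1 else 0) * CG_K N r s lam j l * x ^ k * y ^ l)
        = c i j * (x^i * (\<Sum>l<N. CG_K N r s lam j l * y^l))" by simp
  qed
  also have "\<dots> = (\<Sum>i<N. \<Sum>j<N. c i j * (x^i * (KC (alK (zeta lam)) s y * y^j + KD (beK r) s (N-1) y * y'^j)))"
    by (intro sum.cong refl) (simp add: Ksum[OF _ assms(1-6)] assms(7))
  also have "\<dots> = KC (alK (zeta lam)) s y * ev N c x y + KD (beK r) s (N-1) y * ev N c x y'"
    unfolding ev_mono by (simp add: sum_distrib_left sum.distrib algebra_simps)
  finally show ?thesis .
qed

lemma poly_zero_cofinite:
  fixes a :: "nat \<Rightarrow> complex"
  assumes "finite B" "\<And>x. x \<notin> B \<Longrightarrow> (\<Sum>k<N. a k * x^k) = 0"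
  shows "\<forall>k<N. a k = 0"
proof -
  define p where "p = (\<Sum>k<N. monom (a k) k)"
  have ev: "poly p x = (\<Sum>k<N. a k * x^k)" for x
    by (simp add: p_def poly_sum poly_monom)
  have "p = 0"
  proof (rule ccontr)
    assume "p \<noteq> 0"
    then have "finite {x. poly p x = 0}" by (rule poly_roots_finite)
    moreover have "UNIV \<subseteq> B \<union> {x. poly p x = 0}" using assms(2) ev by auto
    ultimately have "finite (UNIV :: complex set)" using assms(1) by (meson finite_Un finite_subset)
    then show False using infinite_UNIV_char_0 by blast
  qed
  have "coeff p k = a k" if "k < N" for k
    using that by (simp add: p_def coeff_sum coeff_monom)
  then show ?thesis using \<open>p = 0\<close> by auto
qed

lemma ev_zero_generic:
  fixes d :: "nat \<Rightarrow> nat \<Rightarrow> complex"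
  assumes "finite Yb" "\<And>y. y \<notin> Yb \<Longrightarrow> \<exists>Xb. finite Xb \<and> (\<forall>x. x \<notin> Xb \<longrightarrow> ev N d x y = 0)"
  shows "\<forall>k<N. \<forall>l<N. d k l = 0"
proof -
  have A: "\<forall>k<N. (\<Sum>l<N. d k l * y^l) = 0" if yY: "y \<notin> Yb" for y
  proof -
    obtain Xb where "finite Xb" "\<forall>x. x \<notin> Xb \<longrightarrow> ev N d x y = 0" using assms(2)[OF yY] by blast
    moreover have "ev N d x y = (\<Sum>k<N. (\<Sum>l<N. d k l * y^l) * x^k)" for x
      by (simp add: ev_def sum_distrib_right sum_distrib_left mult_ac)
    ultimately show ?thesis using poly_zero_cofinite[where B=Xb and N=N and a="\<lambda>k. \<Sum>l<N. d k l * y^l"] by auto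
  qed
  show ?thesis
  proof (intro allI impI)
    fix k l assume "k < N" "l < N"
    have "\<forall>l<N. d k l = 0"
      using poly_zero_cofinite[where B=Yb and N=N and a="\<lambda>l. d k l"] A \<open>k < N\<close> assms(1) by blast
    then show "d k l = 0" using \<open>l < N\<close> by blast
  qed
qed

lemma nice:
  fixes x y P s X Y K H F G a bm bp al am be :: complex
  assumes H: "P \<noteq> 0" "s \<noteq> 0" "X \<noteq> 0" "Y \<noteq> 0" "X - Y \<noteq> 0" "X*Y - 1 \<noteq> 0" "1 - X \<noteq> 0" "1 - Y \<noteq> 0"
    and xy: "x = P*s*X" "y = s*Y"
    and KHFG: "K = X/(1-X)" "H = Y/(1-Y)" "F = X/(X-Y)" "G = X*Y/(X*Y-1)"
  shows
"(KC al s (s^2/y)) = (al - (H+1))"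
    and "(KC al s (x/P)) = (al + K)"
    and "(KC al s y) = (al + H)"
    and "(KC am s (P*s^2/x)) = (am - (K+1))"
    and "(KC am s (s^2/y)) = (am - (H+1))"
    and "(KC am s (x/P)) = (am + K)"
    and "(KC am s y) = (am + H)"
    and "(KD be s n (P*s^2/x)) = ((1/X^n)*(be + (K+1)))"
    and "(KD be s n (s^2/y)) = ((1/Y^n)*(be + (H+1)))"
    and "(KD be s n (x/P)) = (X^n*(be - K))"
    and "(KD be s n y) = (Y^n*(be - H))"
    and "(RA a P x y) = (a - F)"
    and "(RA a P x (s^2/y)) = (a - G)"
    and "(RA a P (y*P) (x/P)) = (a - (1-F))"
    and "(RA a P (y*P) (P*s^2/x)) = (a - G)"
    and "(RA a P (P*s^2/y) (x/P)) = (a - (1-G))"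
    and "(RA a P (P*s^2/y) (P*s^2/x)) = (a - F)"
    and "(RB bm P x y) = (bm + F)"
    and "(RB bm P x (s^2/y)) = (bm + G)"
    and "(RB bm P (y*P) (x/P)) = (bm + (1-F))"
    and "(RB bm P (y*P) (P*s^2/x)) = (bm + G)"
    and "(RB bm P (P*s^2/y) (x/P)) = (bm + (1-G))"
    and "(RB bm P (P*s^2/y) (P*s^2/x)) = (bm + F)"
    and "(RB bp P x y) = (bp + F)"
    and "(RB bp P x (s^2/y)) = (bp + G)"
    and "(RB bp P (y*P) (x/P)) = (bp + (1-F))"
    and "(RB bp P (y*P) (P*s^2/x)) = (bp + G)"
    and "(RB bp P (P*s^2/y) (x/P)) = (bp + (1-G))"
    and "(RB bp P (P*s^2/y) (P*s^2/x)) = (bp + F)"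
  unfolding RA_def RB_def KC_def KD_def xy KHFG using H
  by (simp_all add: power2_eq_square divide_simps power_divide) (simp_all add: algebra_simps)

lemma EZ:
  fixes Z1 Z2 al am bm bp :: complex
  assumes Z: "Z1 - Z2 \<noteq> 0" "Z1*Z2 - 1 \<noteq> 0" "Z1^2 - 1 \<noteq> 0" "Z2^2 - 1 \<noteq> 0"
    and B: "bm = Z2/(Z1-Z2)" "bp = 1/(Z1*Z2-1)" "al = -1/(Z1^2-1)" "am = -1/(Z2^2-1)"
  shows "al*bp + al + am*bp - bp + al*bm - am*bm = 0"
  unfolding B using Z
  by (simp add: divide_simps) (simp add: algebra_simps power2_eq_square)

lemma EXY:
  fixes X Y K H F G :: complex
  assumes H: "X - Y \<noteq> 0" "X*Y - 1 \<noteq> 0" "1 - X \<noteq> 0" "1 - Y \<noteq> 0"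
    and KHFG: "K = X/(1-X)" "H = Y/(1-Y)" "F = X/(X-Y)" "G = X*Y/(X*Y-1)"
  shows "-K*F + K - K*G - G + H*F - H*G = 0"
  unfolding KHFG using H
  by (simp add: divide_simps) (simp add: algebra_simps)

lemma core2:
  fixes K H F G a al am bm bp be Xn iXn Yn iYn :: complex
  assumes E: "al*bp + al + am*bp - bp + al*bm - am*bm = 0" "-K*F + K - K*G - G + H*F - H*G = 0"
    and I: "Xn*iXn = 1" "Yn*iYn = 1"
  shows "(a - F)*(al + K)*(a - (1-F)) + (bm + F)*(al + H)*(bp + F) + (bm + F)*(bp + G)*(am - (H+1)) = (am + H)*(bp + F)*(bm + G) + (a - G)*(al + K)*(a - (1-G)) + (bp + G)*(al - (H+1))*(bm + G)"
proof -
  have "((a - F)*(al + K)*(a - (1-F)) + (bm + F)*(al + H)*(bp + F) + (bm + F)*(bp + G)*(am - (H+1))) - ((am + H)*(bp + F)*(bm + G) + (a - G)*(al + K)*(a - (1-G)) + (bp + G)*(al - (H+1))*(bm + G)) = (F-G)*((al*bp + al + am*bp - bp + al*bm - am*bm) + (-K*F + K - K*G - G + H*F - H*G))"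
    by (simp add: algebra_simps)
  from this[unfolded E I] show ?thesis by simp
qed

lemma core3:
  fixes K H F G a al am bm bp be Xn iXn Yn iYn :: complex
  assumes E: "al*bp + al + am*bp - bp + al*bm - am*bm = 0" "-K*F + K - K*G - G + H*F - H*G = 0"
    and I: "Xn*iXn = 1" "Yn*iYn = 1"
  shows "(al + K)*(bp + (1-F))*(am + K) + (Xn*(be - K))*(bp + G)*(iXn*(be + (K+1))) + (bm + F)*(al + H)*(am + K) = (am + H)*(al + K)*(bm + (1-F)) + (am + H)*(bp + F)*(al + H) + (Yn*(be - H))*(bp + G)*(iYn*(be + (H+1)))"
proof -
  have "((al + K)*(bp + (1-F))*(am + K) + (Xn*(be - K))*(bp + G)*(iXn*(be + (K+1))) + (bm + F)*(al + H)*(am + K)) - ((am + H)*(al + K)*(bm + (1-F)) + (am + H)*(bp + F)*(al + H) + (Yn*(be - H))*(bp + G)*(iYn*(be + (H+1)))) = (K-H)*((al*bp + al + am*bp - bp + al*bm - am*bm) + (-K*F + K - K*G - G + H*F - H*G)) + (be-K)*(bp+G)*(be+(K+1))*(Xn*iXn-1) - (be-H)*(bp+G)*(be+(H+1))*(Yn*iYn-1)"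
    by (simp add: algebra_simps)
  from this[unfolded E I] show ?thesis by simp
qed

lemma core4:
  fixes K H F G a al am bm bp be Xn iXn Yn iYn :: complex
  assumes E: "al*bp + al + am*bp - bp + al*bm - am*bm = 0" "-K*F + K - K*G - G + H*F - H*G = 0"
    and I: "Xn*iXn = 1" "Yn*iYn = 1"
  shows "(al + K)*(bp + (1-F)) + (bp + G)*(am - (K+1)) + (bm + F)*(al + H) = (am + H)*(bm + G)"
proof -
  have "((al + K)*(bp + (1-F)) + (bp + G)*(am - (K+1)) + (bm + F)*(al + H)) - ((am + H)*(bm + G)) = 1*((al*bp + al + am*bp - bp + al*bm - am*bm) + (-K*F + K - K*G - G + H*F - H*G))"
    by (simp add: algebra_simps)
  from this[unfolded E I] show ?thesis by simp
qed

lemma core7: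
  fixes K H F G a al am bm bp be Xn iXn Yn iYn :: complex
  assumes E: "al*bp + al + am*bp - bp + al*bm - am*bm = 0" "-K*F + K - K*G - G + H*F - H*G = 0"
    and I: "Xn*iXn = 1" "Yn*iYn = 1"
  shows "(bm + F)*(am + K) = (am + H)*(bp + F) + (al + K)*(bm + (1-G)) + (bp + G)*(al - (H+1))"
proof -
  have "((bm + F)*(am + K)) - ((am + H)*(bp + F) + (al + K)*(bm + (1-G)) + (bp + G)*(al - (H+1))) = (-1)*((al*bp + al + am*bp - bp + al*bm - am*bm) + (-K*F + K - K*G - G + H*F - H*G))"
    by (simp add: algebra_simps)
  from this[unfolded E I] show ?thesis by simp
qed

lemma coef1:
  fixes x y P s a bm bp al am be Z1 Z2 :: complex
  assumes H: "P \<noteq> 0" "s \<noteq> 0" "x \<noteq> 0" "y \<noteq> 0" "x \<noteq> P*s" "y \<noteq> s" "x \<noteq> P*y" "x*y \<noteq> P*s^2"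
    and Z: "Z1 - Z2 \<noteq> 0" "Z1*Z2 - 1 \<noteq> 0" "Z1^2 - 1 \<noteq> 0" "Z2^2 - 1 \<noteq> 0" and B: "bm = Z2/(Z1-Z2)" "bp = 1/(Z1*Z2-1)" "al = -1/(Z1^2-1)" "am = -1/(Z2^2-1)"
  shows "(RA a P x y)*(KC al s (x/P))*(RA a P (y*P) (x/P))*(KC am s y) + (RB bm P x y)*(KC al s y)*(RB bp P x y)*(KC am s y) + (RB bm P x y)*(KD be s n y)*(RB bp P x (s^2/y))*(KD be s n (s^2/y)) = (KC am s y)*(RA a P x y)*(KC al s (x/P))*(RA a P (y*P) (x/P)) + (KC am s y)*(RB bp P x y)*(KC al s y)*(RB bm P x y) + (KD be s n y)*(RB bp P x (s^2/y))*(KD be s n (s^2/y))*(RB bm P x y)"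
proof -
  define X where "X = x/(P*s)"
  define Y where "Y = y/s"
  have xy: "x = P*s*X" "y = s*Y" using H by (simp_all add: X_def Y_def)
  have X0: "X \<noteq> 0" "Y \<noteq> 0" using H by (simp_all add: X_def Y_def)
  have XY: "X - Y \<noteq> 0" using H(1,2,7) by (simp add: X_def Y_def field_simps)
  have XY1: "X*Y - 1 \<noteq> 0" using H(1,2,8) by (simp add: X_def Y_def field_simps power2_eq_square)
  have X1: "1 - X \<noteq> 0" "1 - Y \<noteq> 0" using H(1,2,5,6) by (simp_all add: X_def Y_def field_simps)
  define K where "K = X/(1-X)"
  define H' where "H' = Y/(1-Y)"
  define F where "F = X/(X-Y)"
  define G where "G = X*Y/(X*Y-1)"
  note N = nice[OF H(1,2) X0 XY XY1 X1 xy K_def H'_def F_def G_def]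
  show ?thesis unfolding N by (simp only: mult_ac add_ac)
qed

lemma coef2:
  fixes x y P s a bm bp al am be Z1 Z2 :: complex
  assumes H: "P \<noteq> 0" "s \<noteq> 0" "x \<noteq> 0" "y \<noteq> 0" "x \<noteq> P*s" "y \<noteq> s" "x \<noteq> P*y" "x*y \<noteq> P*s^2"
    and Z: "Z1 - Z2 \<noteq> 0" "Z1*Z2 - 1 \<noteq> 0" "Z1^2 - 1 \<noteq> 0" "Z2^2 - 1 \<noteq> 0" and B: "bm = Z2/(Z1-Z2)" "bp = 1/(Z1*Z2-1)" "al = -1/(Z1^2-1)" "am = -1/(Z2^2-1)"
  shows "(RA a P x y)*(KC al s (x/P))*(RA a P (y*P) (x/P))*(KD be s n y) + (RB bm P x y)*(KC al s y)*(RB bp P x y)*(KD be s n y) + (RB bm P x y)*(KD be s n y)*(RB bp P x (s^2/y))*(KC am s (s^2/y)) = (KC am s y)*(RB bp P x y)*(KD be s n y)*(RB bm P x (s^2/y)) + (KD be s n y)*(RA a P x (s^2/y))*(KC al s (x/P))*(RA a P (P*s^2/y) (x/P)) + (KD be s n y)*(RB bp P x (s^2/y))*(KC al s (s^2/y))*(RB bm P x (s^2/y))"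
proof -
  define X where "X = x/(P*s)"
  define Y where "Y = y/s"
  have xy: "x = P*s*X" "y = s*Y" using H by (simp_all add: X_def Y_def)
  have X0: "X \<noteq> 0" "Y \<noteq> 0" using H by (simp_all add: X_def Y_def)
  have XY: "X - Y \<noteq> 0" using H(1,2,7) by (simp add: X_def Y_def field_simps)
  have XY1: "X*Y - 1 \<noteq> 0" using H(1,2,8) by (simp add: X_def Y_def field_simps power2_eq_square)
  have X1: "1 - X \<noteq> 0" "1 - Y \<noteq> 0" using H(1,2,5,6) by (simp_all add: X_def Y_def field_simps)
  define K where "K = X/(1-X)"
  define H' where "H' = Y/(1-Y)"
  define F where "F = X/(X-Y)"
  define G where "G = X*Y/(X*Y-1)"
  note N = nice[OF H(1,2) X0 XY XY1 X1 xy K_def H'_def F_def G_def]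
  have EZ': "al*bp + al + am*bp - bp + al*bm - am*bm = 0" by (rule EZ[OF Z B])
  have EXY': "-K*F + K - K*G - G + H'*F - H'*G = 0" by (rule EXY[OF XY XY1 X1 K_def H'_def F_def G_def])
  have I: "X^n * (1/X^n) = 1" "Y^n * (1/Y^n) = 1" using X0 by simp_all
  have C: "(RA a P x y)*(KC al s (x/P))*(RA a P (y*P) (x/P)) + (RB bm P x y)*(KC al s y)*(RB bp P x y) + (RB bm P x y)*(RB bp P x (s^2/y))*(KC am s (s^2/y)) = (KC am s y)*(RB bp P x y)*(RB bm P x (s^2/y)) + (RA a P x (s^2/y))*(KC al s (x/P))*(RA a P (P*s^2/y) (x/P)) + (RB bp P x (s^2/y))*(KC al s (s^2/y))*(RB bm P x (s^2/y))"
    unfolding N by (rule core2[OF EZ' EXY' I])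
  have E1: "(RA a P x y)*(KC al s (x/P))*(RA a P (y*P) (x/P))*(KD be s n y) + (RB bm P x y)*(KC al s y)*(RB bp P x y)*(KD be s n y) + (RB bm P x y)*(KD be s n y)*(RB bp P x (s^2/y))*(KC am s (s^2/y)) = (KD be s n y) * ((RA a P x y)*(KC al s (x/P))*(RA a P (y*P) (x/P)) + (RB bm P x y)*(KC al s y)*(RB bp P x y) + (RB bm P x y)*(RB bp P x (s^2/y))*(KC am s (s^2/y)))" by (simp add: algebra_simps)
  have E2: "(KC am s y)*(RB bp P x y)*(KD be s n y)*(RB bm P x (s^2/y)) + (KD be s n y)*(RA a P x (s^2/y))*(KC al s (x/P))*(RA a P (P*s^2/y) (x/P)) + (KD be s n y)*(RB bp P x (s^2/y))*(KC al s (s^2/y))*(RB bm P x (s^2/y)) = (KD be s n y) * ((KC am s y)*(RB bp P x y)*(RB bm P x (s^2/y)) + (RA a P x (s^2/y))*(KC al s (x/P))*(RA a P (P*s^2/y) (x/P)) + (RB bp P x (s^2/y))*(KC al s (s^2/y))*(RB bm P x (s^2/y)))" by (simp add: algebra_simps)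
  show ?thesis by (simp only: E1 E2 C)
qed

lemma coef3:
  fixes x y P s a bm bp al am be Z1 Z2 :: complex
  assumes H: "P \<noteq> 0" "s \<noteq> 0" "x \<noteq> 0" "y \<noteq> 0" "x \<noteq> P*s" "y \<noteq> s" "x \<noteq> P*y" "x*y \<noteq> P*s^2"
    and Z: "Z1 - Z2 \<noteq> 0" "Z1*Z2 - 1 \<noteq> 0" "Z1^2 - 1 \<noteq> 0" "Z2^2 - 1 \<noteq> 0" and B: "bm = Z2/(Z1-Z2)" "bp = 1/(Z1*Z2-1)" "al = -1/(Z1^2-1)" "am = -1/(Z2^2-1)"
  shows "(RA a P x y)*(KC al s (x/P))*(RB bp P (y*P) (x/P))*(KC am s (x/P)) + (RA a P x y)*(KD be s n (x/P))*(RB bp P (y*P) (P*s^2/x))*(KD be s n (P*s^2/x)) + (RB bm P x y)*(KC al s y)*(RA a P x y)*(KC am s (x/P)) = (KC am s y)*(RA a P x y)*(KC al s (x/P))*(RB bm P (y*P) (x/P)) + (KC am s y)*(RB bp P x y)*(KC al s y)*(RA a P x y) + (KD be s n y)*(RB bp P x (s^2/y))*(KD be s n (s^2/y))*(RA a P x y)"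
proof -
  define X where "X = x/(P*s)"
  define Y where "Y = y/s"
  have xy: "x = P*s*X" "y = s*Y" using H by (simp_all add: X_def Y_def)
  have X0: "X \<noteq> 0" "Y \<noteq> 0" using H by (simp_all add: X_def Y_def)
  have XY: "X - Y \<noteq> 0" using H(1,2,7) by (simp add: X_def Y_def field_simps)
  have XY1: "X*Y - 1 \<noteq> 0" using H(1,2,8) by (simp add: X_def Y_def field_simps power2_eq_square)
  have X1: "1 - X \<noteq> 0" "1 - Y \<noteq> 0" using H(1,2,5,6) by (simp_all add: X_def Y_def field_simps)
  define K where "K = X/(1-X)"
  define H' where "H' = Y/(1-Y)"
  define F where "F = X/(X-Y)"
  define G where "G = X*Y/(X*Y-1)"
  note N = nice[OF H(1,2) X0 XY XY1 X1 xy K_def H'_def F_def G_def]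
  have EZ': "al*bp + al + am*bp - bp + al*bm - am*bm = 0" by (rule EZ[OF Z B])
  have EXY': "-K*F + K - K*G - G + H'*F - H'*G = 0" by (rule EXY[OF XY XY1 X1 K_def H'_def F_def G_def])
  have I: "X^n * (1/X^n) = 1" "Y^n * (1/Y^n) = 1" using X0 by simp_all
  have C: "(KC al s (x/P))*(RB bp P (y*P) (x/P))*(KC am s (x/P)) + (KD be s n (x/P))*(RB bp P (y*P) (P*s^2/x))*(KD be s n (P*s^2/x)) + (RB bm P x y)*(KC al s y)*(KC am s (x/P)) = (KC am s y)*(KC al s (x/P))*(RB bm P (y*P) (x/P)) + (KC am s y)*(RB bp P x y)*(KC al s y) + (KD be s n y)*(RB bp P x (s^2/y))*(KD be s n (s^2/y))"
    unfolding N by (rule core3[OF EZ' EXY' I])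
  have E1: "(RA a P x y)*(KC al s (x/P))*(RB bp P (y*P) (x/P))*(KC am s (x/P)) + (RA a P x y)*(KD be s n (x/P))*(RB bp P (y*P) (P*s^2/x))*(KD be s n (P*s^2/x)) + (RB bm P x y)*(KC al s y)*(RA a P x y)*(KC am s (x/P)) = (RA a P x y) * ((KC al s (x/P))*(RB bp P (y*P) (x/P))*(KC am s (x/P)) + (KD be s n (x/P))*(RB bp P (y*P) (P*s^2/x))*(KD be s n (P*s^2/x)) + (RB bm P x y)*(KC al s y)*(KC am s (x/P)))" by (simp add: algebra_simps)
  have E2: "(KC am s y)*(RA a P x y)*(KC al s (x/P))*(RB bm P (y*P) (x/P)) + (KC am s y)*(RB bp P x y)*(KC al s y)*(RA a P x y) + (KD be s n y)*(RB bp P x (s^2/y))*(KD be s n (s^2/y))*(RA a P x y) = (RA a P x y) * ((KC am s y)*(KC al s (x/P))*(RB bm P (y*P) (x/P)) + (KC am s y)*(RB bp P x y)*(KC al s y) + (KD be s n y)*(RB bp P x (s^2/y))*(KD be s n (s^2/y)))" by (simp add: algebra_simps)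
  show ?thesis by (simp only: E1 E2 C)
qed

lemma coef4:
  fixes x y P s a bm bp al am be Z1 Z2 :: complex
  assumes H: "P \<noteq> 0" "s \<noteq> 0" "x \<noteq> 0" "y \<noteq> 0" "x \<noteq> P*s" "y \<noteq> s" "x \<noteq> P*y" "x*y \<noteq> P*s^2"
    and Z: "Z1 - Z2 \<noteq> 0" "Z1*Z2 - 1 \<noteq> 0" "Z1^2 - 1 \<noteq> 0" "Z2^2 - 1 \<noteq> 0" and B: "bm = Z2/(Z1-Z2)" "bp = 1/(Z1*Z2-1)" "al = -1/(Z1^2-1)" "am = -1/(Z2^2-1)"
  shows "(RA a P x y)*(KC al s (x/P))*(RB bp P (y*P) (x/P))*(KD be s n (x/P)) + (RA a P x y)*(KD be s n (x/P))*(RB bp P (y*P) (P*s^2/x))*(KC am s (P*s^2/x)) + (RB bm P x y)*(KC al s y)*(RA a P x y)*(KD be s n (x/P)) = (KC am s y)*(RA a P x y)*(KD be s n (x/P))*(RB bm P (y*P) (P*s^2/x))"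
proof -
  define X where "X = x/(P*s)"
  define Y where "Y = y/s"
  have xy: "x = P*s*X" "y = s*Y" using H by (simp_all add: X_def Y_def)
  have X0: "X \<noteq> 0" "Y \<noteq> 0" using H by (simp_all add: X_def Y_def)
  have XY: "X - Y \<noteq> 0" using H(1,2,7) by (simp add: X_def Y_def field_simps)
  have XY1: "X*Y - 1 \<noteq> 0" using H(1,2,8) by (simp add: X_def Y_def field_simps power2_eq_square)
  have X1: "1 - X \<noteq> 0" "1 - Y \<noteq> 0" using H(1,2,5,6) by (simp_all add: X_def Y_def field_simps)
  define K where "K = X/(1-X)"
  define H' where "H' = Y/(1-Y)"
  define F where "F = X/(X-Y)"
  define G where "G = X*Y/(X*Y-1)"
  note N = nice[OF H(1,2) X0 XY XY1 X1 xy K_def H'_def F_def G_def]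
  have EZ': "al*bp + al + am*bp - bp + al*bm - am*bm = 0" by (rule EZ[OF Z B])
  have EXY': "-K*F + K - K*G - G + H'*F - H'*G = 0" by (rule EXY[OF XY XY1 X1 K_def H'_def F_def G_def])
  have I: "X^n * (1/X^n) = 1" "Y^n * (1/Y^n) = 1" using X0 by simp_all
  have C: "(KC al s (x/P))*(RB bp P (y*P) (x/P)) + (RB bp P (y*P) (P*s^2/x))*(KC am s (P*s^2/x)) + (RB bm P x y)*(KC al s y) = (KC am s y)*(RB bm P (y*P) (P*s^2/x))"
    unfolding N by (rule core4[OF EZ' EXY' I])
  have E1: "(RA a P x y)*(KC al s (x/P))*(RB bp P (y*P) (x/P))*(KD be s n (x/P)) + (RA a P x y)*(KD be s n (x/P))*(RB bp P (y*P) (P*s^2/x))*(KC am s (P*s^2/x)) + (RB bm P x y)*(KC al s y)*(RA a P x y)*(KD be s n (x/P)) = (RA a P x y)*(KD be s n (x/P)) * ((KC al s (x/P))*(RB bp P (y*P) (x/P)) + (RB bp P (y*P) (P*s^2/x))*(KC am s (P*s^2/x)) + (RB bm P x y)*(KC al s y))" by (simp add: algebra_simps)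
  have E2: "(KC am s y)*(RA a P x y)*(KD be s n (x/P))*(RB bm P (y*P) (P*s^2/x)) = (RA a P x y)*(KD be s n (x/P)) * ((KC am s y)*(RB bm P (y*P) (P*s^2/x)))" by (simp add: algebra_simps)
  show ?thesis by (simp only: E1 E2 C)
qed

lemma coef5:
  fixes x y P s a bm bp al am be Z1 Z2 :: complex
  assumes H: "P \<noteq> 0" "s \<noteq> 0" "x \<noteq> 0" "y \<noteq> 0" "x \<noteq> P*s" "y \<noteq> s" "x \<noteq> P*y" "x*y \<noteq> P*s^2"
    and Z: "Z1 - Z2 \<noteq> 0" "Z1*Z2 - 1 \<noteq> 0" "Z1^2 - 1 \<noteq> 0" "Z2^2 - 1 \<noteq> 0" and B: "bm = Z2/(Z1-Z2)" "bp = 1/(Z1*Z2-1)" "al = -1/(Z1^2-1)" "am = -1/(Z2^2-1)"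
  shows "(RA a P x y)*(KD be s n (x/P))*(RA a P (y*P) (P*s^2/x))*(KC am s y) = (KC am s y)*(RA a P x y)*(KD be s n (x/P))*(RA a P (y*P) (P*s^2/x))"
proof -
  define X where "X = x/(P*s)"
  define Y where "Y = y/s"
  have xy: "x = P*s*X" "y = s*Y" using H by (simp_all add: X_def Y_def)
  have X0: "X \<noteq> 0" "Y \<noteq> 0" using H by (simp_all add: X_def Y_def)
  have XY: "X - Y \<noteq> 0" using H(1,2,7) by (simp add: X_def Y_def field_simps)
  have XY1: "X*Y - 1 \<noteq> 0" using H(1,2,8) by (simp add: X_def Y_def field_simps power2_eq_square)
  have X1: "1 - X \<noteq> 0" "1 - Y \<noteq> 0" using H(1,2,5,6) by (simp_all add: X_def Y_def field_simps)
  define K where "K = X/(1-X)"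
  define H' where "H' = Y/(1-Y)"
  define F where "F = X/(X-Y)"
  define G where "G = X*Y/(X*Y-1)"
  note N = nice[OF H(1,2) X0 XY XY1 X1 xy K_def H'_def F_def G_def]
  show ?thesis unfolding N by (simp only: mult_ac add_ac)
qed

lemma coef6:
  fixes x y P s a bm bp al am be Z1 Z2 :: complex
  assumes H: "P \<noteq> 0" "s \<noteq> 0" "x \<noteq> 0" "y \<noteq> 0" "x \<noteq> P*s" "y \<noteq> s" "x \<noteq> P*y" "x*y \<noteq> P*s^2"
    and Z: "Z1 - Z2 \<noteq> 0" "Z1*Z2 - 1 \<noteq> 0" "Z1^2 - 1 \<noteq> 0" "Z2^2 - 1 \<noteq> 0" and B: "bm = Z2/(Z1-Z2)" "bp = 1/(Z1*Z2-1)" "al = -1/(Z1^2-1)" "am = -1/(Z2^2-1)"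
  shows "(RA a P x y)*(KD be s n (x/P))*(RA a P (y*P) (P*s^2/x))*(KD be s n y) = (KD be s n y)*(RA a P x (s^2/y))*(KD be s n (x/P))*(RA a P (P*s^2/y) (P*s^2/x))"
proof -
  define X where "X = x/(P*s)"
  define Y where "Y = y/s"
  have xy: "x = P*s*X" "y = s*Y" using H by (simp_all add: X_def Y_def)
  have X0: "X \<noteq> 0" "Y \<noteq> 0" using H by (simp_all add: X_def Y_def)
  have XY: "X - Y \<noteq> 0" using H(1,2,7) by (simp add: X_def Y_def field_simps)
  have XY1: "X*Y - 1 \<noteq> 0" using H(1,2,8) by (simp add: X_def Y_def field_simps power2_eq_square)
  have X1: "1 - X \<noteq> 0" "1 - Y \<noteq> 0" using H(1,2,5,6) by (simp_all add: X_def Y_def field_simps)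
  define K where "K = X/(1-X)"
  define H' where "H' = Y/(1-Y)"
  define F where "F = X/(X-Y)"
  define G where "G = X*Y/(X*Y-1)"
  note N = nice[OF H(1,2) X0 XY XY1 X1 xy K_def H'_def F_def G_def]
  show ?thesis unfolding N by (simp only: mult_ac add_ac)
qed

lemma coef7:
  fixes x y P s a bm bp al am be Z1 Z2 :: complex
  assumes H: "P \<noteq> 0" "s \<noteq> 0" "x \<noteq> 0" "y \<noteq> 0" "x \<noteq> P*s" "y \<noteq> s" "x \<noteq> P*y" "x*y \<noteq> P*s^2"
    and Z: "Z1 - Z2 \<noteq> 0" "Z1*Z2 - 1 \<noteq> 0" "Z1^2 - 1 \<noteq> 0" "Z2^2 - 1 \<noteq> 0" and B: "bm = Z2/(Z1-Z2)" "bp = 1/(Z1*Z2-1)" "al = -1/(Z1^2-1)" "am = -1/(Z2^2-1)"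
  shows "(RB bm P x y)*(KD be s n y)*(RA a P x (s^2/y))*(KC am s (x/P)) = (KC am s y)*(RB bp P x y)*(KD be s n y)*(RA a P x (s^2/y)) + (KD be s n y)*(RA a P x (s^2/y))*(KC al s (x/P))*(RB bm P (P*s^2/y) (x/P)) + (KD be s n y)*(RB bp P x (s^2/y))*(KC al s (s^2/y))*(RA a P x (s^2/y))"
proof -
  define X where "X = x/(P*s)"
  define Y where "Y = y/s"
  have xy: "x = P*s*X" "y = s*Y" using H by (simp_all add: X_def Y_def)
  have X0: "X \<noteq> 0" "Y \<noteq> 0" using H by (simp_all add: X_def Y_def)
  have XY: "X - Y \<noteq> 0" using H(1,2,7) by (simp add: X_def Y_def field_simps)
  have XY1: "X*Y - 1 \<noteq> 0" using H(1,2,8) by (simp add: X_def Y_def field_simps power2_eq_square)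
  have X1: "1 - X \<noteq> 0" "1 - Y \<noteq> 0" using H(1,2,5,6) by (simp_all add: X_def Y_def field_simps)
  define K where "K = X/(1-X)"
  define H' where "H' = Y/(1-Y)"
  define F where "F = X/(X-Y)"
  define G where "G = X*Y/(X*Y-1)"
  note N = nice[OF H(1,2) X0 XY XY1 X1 xy K_def H'_def F_def G_def]
  have EZ': "al*bp + al + am*bp - bp + al*bm - am*bm = 0" by (rule EZ[OF Z B])
  have EXY': "-K*F + K - K*G - G + H'*F - H'*G = 0" by (rule EXY[OF XY XY1 X1 K_def H'_def F_def G_def])
  have I: "X^n * (1/X^n) = 1" "Y^n * (1/Y^n) = 1" using X0 by simp_all
  have C: "(RB bm P x y)*(KC am s (x/P)) = (KC am s y)*(RB bp P x y) + (KC al s (x/P))*(RB bm P (P*s^2/y) (x/P)) + (RB bp P x (s^2/y))*(KC al s (s^2/y))"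
    unfolding N by (rule core7[OF EZ' EXY' I])
  have E1: "(RB bm P x y)*(KD be s n y)*(RA a P x (s^2/y))*(KC am s (x/P)) = (KD be s n y)*(RA a P x (s^2/y)) * ((RB bm P x y)*(KC am s (x/P)))" by (simp add: algebra_simps)
  have E2: "(KC am s y)*(RB bp P x y)*(KD be s n y)*(RA a P x (s^2/y)) + (KD be s n y)*(RA a P x (s^2/y))*(KC al s (x/P))*(RB bm P (P*s^2/y) (x/P)) + (KD be s n y)*(RB bp P x (s^2/y))*(KC al s (s^2/y))*(RA a P x (s^2/y)) = (KD be s n y)*(RA a P x (s^2/y)) * ((KC am s y)*(RB bp P x y) + (KC al s (x/P))*(RB bm P (P*s^2/y) (x/P)) + (RB bp P x (s^2/y))*(KC al s (s^2/y)))" by (simp add: algebra_simps)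
  show ?thesis by (simp only: E1 E2 C)
qed

lemma coef8:
  fixes x y P s a bm bp al am be Z1 Z2 :: complex
  assumes H: "P \<noteq> 0" "s \<noteq> 0" "x \<noteq> 0" "y \<noteq> 0" "x \<noteq> P*s" "y \<noteq> s" "x \<noteq> P*y" "x*y \<noteq> P*s^2"
    and Z: "Z1 - Z2 \<noteq> 0" "Z1*Z2 - 1 \<noteq> 0" "Z1^2 - 1 \<noteq> 0" "Z2^2 - 1 \<noteq> 0" and B: "bm = Z2/(Z1-Z2)" "bp = 1/(Z1*Z2-1)" "al = -1/(Z1^2-1)" "am = -1/(Z2^2-1)"
  shows "(RB bm P x y)*(KD be s n y)*(RA a P x (s^2/y))*(KD be s n (x/P)) = (KD be s n y)*(RA a P x (s^2/y))*(KD be s n (x/P))*(RB bm P (P*s^2/y) (P*s^2/x))"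
proof -
  define X where "X = x/(P*s)"
  define Y where "Y = y/s"
  have xy: "x = P*s*X" "y = s*Y" using H by (simp_all add: X_def Y_def)
  have X0: "X \<noteq> 0" "Y \<noteq> 0" using H by (simp_all add: X_def Y_def)
  have XY: "X - Y \<noteq> 0" using H(1,2,7) by (simp add: X_def Y_def field_simps)
  have XY1: "X*Y - 1 \<noteq> 0" using H(1,2,8) by (simp add: X_def Y_def field_simps power2_eq_square)
  have X1: "1 - X \<noteq> 0" "1 - Y \<noteq> 0" using H(1,2,5,6) by (simp_all add: X_def Y_def field_simps)
  define K where "K = X/(1-X)"
  define H' where "H' = Y/(1-Y)"
  define F where "F = X/(X-Y)"
  define G where "G = X*Y/(X*Y-1)"
  note N = nice[OF H(1,2) X0 XY XY1 X1 xy K_def H'_def F_def G_def]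
  show ?thesis unfolding N by (simp only: mult_ac add_ac)
qed

lemma main_point:
  fixes N :: nat and q p r s lam mu x y :: complex and c :: "nat \<Rightarrow> nat \<Rightarrow> complex"
  assumes A: "q \<noteq> 0" "p \<noteq> 0" "r \<noteq> 0" "s \<noteq> 0" "q - inverse q \<noteq> 0" "r - inverse r \<noteq> 0"
    "zeta (lam - mu) - inverse (zeta (lam - mu)) \<noteq> 0" "zeta (lam + mu) - inverse (zeta (lam + mu)) \<noteq> 0"
    "(zeta lam)^2 - inverse ((zeta lam)^2) \<noteq> 0" "(zeta mu)^2 - inverse ((zeta mu)^2) \<noteq> 0"
  and ZF: "Z1 - Z2 \<noteq> 0" "Z1*Z2 - 1 \<noteq> 0" "Z1^2 - 1 \<noteq> 0" "Z2^2 - 1 \<noteq> 0"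
    "bz (zeta (lam - mu)) = Z2/(Z1-Z2)" "bz (zeta (lam + mu)) = 1/(Z1*Z2-1)" "alK (zeta lam) = -1/(Z1^2-1)" "alK (zeta mu) = -1/(Z2^2-1)"
  and G: "x \<noteq> 0" "y \<noteq> 0" "x \<noteq> p^2*s" "y \<noteq> s" "x \<noteq> p^2*y" "x*y \<noteq> p^2*s^2"
  shows "ev N (act N (op_comp N (CG_R q p (lam - mu)) (op_comp N (op1 (CG_K N r s lam)) (op_comp N (op21 (CG_R q p (lam + mu))) (op2 (CG_K N r s mu))))) c) x y = ev N (act N (op_comp N (op2 (CG_K N r s mu)) (op_comp N (CG_R q p (lam + mu)) (op_comp N (op1 (CG_K N r s lam)) (op21 (CG_R q p (lam - mu)))))) c) x y"
proof -
  define P where "P = p^2"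
  define a where "a = aq q"
  define bm where "bm = bz (zeta (lam - mu))"
  define bp where "bp = bz (zeta (lam + mu))"
  define al where "al = alK (zeta lam)"
  define am where "am = alK (zeta mu)"
  define be where "be = beK r"
  define n where "n = N - 1"
  define R1m where "R1m = CG_R q p (lam - mu)"
  define R1p where "R1p = CG_R q p (lam + mu)"
  define R21m where "R21m = op21 (CG_R q p (lam - mu))"
  define R21p where "R21p = op21 (CG_R q p (lam + mu))"
  define K1l where "K1l = op1 (CG_K N r s lam)"
  define K2m where "K2m = op2 (CG_K N r s mu)"
  have P0: "P \<noteq> 0" using A(2) by (simp add: P_def)
  have s0: "s \<noteq> 0" by (rule A(4))
  have G': "x \<noteq> 0" "y \<noteq> 0" "x \<noteq> P*s" "y \<noteq> s" "x \<noteq> P*y" "x*y \<noteq> P*s^2"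
    using G by (simp_all add: P_def)
  have ER1m: "\<And>d u v u' v'. u/P \<noteq> v \<Longrightarrow> u' = u/P \<Longrightarrow> v' = P*v \<Longrightarrow>
      ev N (act N R1m d) u v = RA a P u v * ev N d u' v' + RB bm P u v * ev N d v u"
    unfolding R1m_def P_def a_def bm_def by (rule ev_R[OF A(1,5,7,2)]) simp_all
  have ER1p: "\<And>d u v u' v'. u/P \<noteq> v \<Longrightarrow> u' = u/P \<Longrightarrow> v' = P*v \<Longrightarrow>
      ev N (act N R1p d) u v = RA a P u v * ev N d u' v' + RB bp P u v * ev N d v u"
    unfolding R1p_def P_def a_def bp_def by (rule ev_R[OF A(1,5,8,2)]) simp_all
  have E21m: "\<And>d u v u' v'. v/P \<noteq> u \<Longrightarrow> u' = P*u \<Longrightarrow> v' = v/P \<Longrightarrow>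
      ev N (act N R21m d) u v = RA a P v u * ev N d u' v' + RB bm P v u * ev N d v u"
    unfolding R21m_def P_def a_def bm_def by (rule ev_R21[OF A(1,5,7,2)]) simp_all
  have E21p: "\<And>d u v u' v'. v/P \<noteq> u \<Longrightarrow> u' = P*u \<Longrightarrow> v' = v/P \<Longrightarrow>
      ev N (act N R21p d) u v = RA a P v u * ev N d u' v' + RB bp P v u * ev N d v u"
    unfolding R21p_def P_def a_def bp_def by (rule ev_R21[OF A(1,5,8,2)]) simp_all
  have EK1: "\<And>d u v u'. u \<noteq> 0 \<Longrightarrow> u/s \<noteq> 1 \<Longrightarrow> u' = s^2/u \<Longrightarrow>
      ev N (act N K1l d) u v = KC al s u * ev N d u v + KD be s n u * ev N d u' v"
    unfolding K1l_def al_def be_def n_def by (rule ev_K1[OF A(3,6,9,4)])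
  have EK2: "\<And>d u v v'. v \<noteq> 0 \<Longrightarrow> v/s \<noteq> 1 \<Longrightarrow> v' = s^2/v \<Longrightarrow>
      ev N (act N K2m d) u v = KC am s v * ev N d u v + KD be s n v * ev N d u v'"
    unfolding K2m_def am_def be_def n_def by (rule ev_K2[OF A(3,6,10,4)])
  define c3 where "c3 = act N K2m c"
  define c2 where "c2 = act N R21p c3"
  define c1 where "c1 = act N K1l c2"
  define d3 where "d3 = act N R21m c"
  define d2 where "d2 = act N K1l d3"
  define d1 where "d1 = act N R1p d2"

  have hL0: "ev N (act N R1m c1) x y = (RA a P x y) * ev N c1 (x/P) (y*P) + (RB bm P x y) * ev N c1 y x"
    by (rule ER1m) (use G' P0 s0 in \<open>simp_all add: field_simps power2_eq_square\<close>)
  have hL1: "ev N c1 y x = (KC al s y) * ev N c2 y x + (KD be s n y) * ev N c2 (s^2/y) x"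
    unfolding c1_def by (rule EK1) (use G' P0 s0 in \<open>simp_all add: field_simps power2_eq_square\<close>)
  have hL2: "ev N c1 (x/P) (y*P) = (KC al s (x/P)) * ev N c2 (x/P) (y*P) + (KD be s n (x/P)) * ev N c2 (P*s^2/x) (y*P)"
    unfolding c1_def by (rule EK1) (use G' P0 s0 in \<open>simp_all add: field_simps power2_eq_square\<close>)
  have hL3: "ev N c2 (P*s^2/x) (y*P) = (RA a P (y*P) (P*s^2/x)) * ev N c3 (P*P*s^2/x) y + (RB bp P (y*P) (P*s^2/x)) * ev N c3 (y*P) (P*s^2/x)"
    unfolding c2_def by (rule E21p) (use G' P0 s0 in \<open>simp_all add: field_simps power2_eq_square\<close>)
  have hL4: "ev N c2 (s^2/y) x = (RA a P x (s^2/y)) * ev N c3 (P*s^2/y) (x/P) + (RB bp P x (s^2/y)) * ev N c3 x (s^2/y)"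
    unfolding c2_def by (rule E21p) (use G' P0 s0 in \<open>simp_all add: field_simps power2_eq_square\<close>)
  have hL5: "ev N c2 y x = (RA a P x y) * ev N c3 (y*P) (x/P) + (RB bp P x y) * ev N c3 x y"
    unfolding c2_def by (rule E21p) (use G' P0 s0 in \<open>simp_all add: field_simps power2_eq_square\<close>)
  have hL6: "ev N c2 (x/P) (y*P) = (RA a P (y*P) (x/P)) * ev N c3 x y + (RB bp P (y*P) (x/P)) * ev N c3 (y*P) (x/P)"
    unfolding c2_def by (rule E21p) (use G' P0 s0 in \<open>simp_all add: field_simps power2_eq_square\<close>)
  have hL7: "ev N c3 (P*P*s^2/x) y = (KC am s y) * ev N c (P*P*s^2/x) y + (KD be s n y) * ev N c (P*P*s^2/x) (s^2/y)"
    unfolding c3_def by (rule EK2) (use G' P0 s0 in \<open>simp_all add: field_simps power2_eq_square\<close>)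
  have hL8: "ev N c3 (P*s^2/y) (x/P) = (KC am s (x/P)) * ev N c (P*s^2/y) (x/P) + (KD be s n (x/P)) * ev N c (P*s^2/y) (P*s^2/x)"
    unfolding c3_def by (rule EK2) (use G' P0 s0 in \<open>simp_all add: field_simps power2_eq_square\<close>)
  have hL9: "ev N c3 (y*P) (P*s^2/x) = (KC am s (P*s^2/x)) * ev N c (y*P) (P*s^2/x) + (KD be s n (P*s^2/x)) * ev N c (y*P) (x/P)"
    unfolding c3_def by (rule EK2) (use G' P0 s0 in \<open>simp_all add: field_simps power2_eq_square\<close>)
  have hL10: "ev N c3 (y*P) (x/P) = (KC am s (x/P)) * ev N c (y*P) (x/P) + (KD be s n (x/P)) * ev N c (y*P) (P*s^2/x)"
    unfolding c3_def by (rule EK2) (use G' P0 s0 in \<open>simp_all add: field_simps power2_eq_square\<close>)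
  have hL11: "ev N c3 x (s^2/y) = (KC am s (s^2/y)) * ev N c x (s^2/y) + (KD be s n (s^2/y)) * ev N c x y"
    unfolding c3_def by (rule EK2) (use G' P0 s0 in \<open>simp_all add: field_simps power2_eq_square\<close>)
  have hL12: "ev N c3 x y = (KC am s y) * ev N c x y + (KD be s n y) * ev N c x (s^2/y)"
    unfolding c3_def by (rule EK2) (use G' P0 s0 in \<open>simp_all add: field_simps power2_eq_square\<close>)
  have hR0: "ev N (act N K2m d1) x y = (KC am s y) * ev N d1 x y + (KD be s n y) * ev N d1 x (s^2/y)"
    by (rule EK2) (use G' P0 s0 in \<open>simp_all add: field_simps power2_eq_square\<close>)
  have hR1: "ev N d1 x (s^2/y) = (RA a P x (s^2/y)) * ev N d2 (x/P) (P*s^2/y) + (RB bp P x (s^2/y)) * ev N d2 (s^2/y) x"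
    unfolding d1_def by (rule ER1p) (use G' P0 s0 in \<open>simp_all add: field_simps power2_eq_square\<close>)
  have hR2: "ev N d1 x y = (RA a P x y) * ev N d2 (x/P) (y*P) + (RB bp P x y) * ev N d2 y x"
    unfolding d1_def by (rule ER1p) (use G' P0 s0 in \<open>simp_all add: field_simps power2_eq_square\<close>)
  have hR3: "ev N d2 (s^2/y) x = (KC al s (s^2/y)) * ev N d3 (s^2/y) x + (KD be s n (s^2/y)) * ev N d3 y x"
    unfolding d2_def by (rule EK1) (use G' P0 s0 in \<open>simp_all add: field_simps power2_eq_square\<close>)
  have hR4: "ev N d2 y x = (KC al s y) * ev N d3 y x + (KD be s n y) * ev N d3 (s^2/y) x"
    unfolding d2_def by (rule EK1) (use G' P0 s0 in \<open>simp_all add: field_simps power2_eq_square\<close>)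
  have hR5: "ev N d2 (x/P) (P*s^2/y) = (KC al s (x/P)) * ev N d3 (x/P) (P*s^2/y) + (KD be s n (x/P)) * ev N d3 (P*s^2/x) (P*s^2/y)"
    unfolding d2_def by (rule EK1) (use G' P0 s0 in \<open>simp_all add: field_simps power2_eq_square\<close>)
  have hR6: "ev N d2 (x/P) (y*P) = (KC al s (x/P)) * ev N d3 (x/P) (y*P) + (KD be s n (x/P)) * ev N d3 (P*s^2/x) (y*P)"
    unfolding d2_def by (rule EK1) (use G' P0 s0 in \<open>simp_all add: field_simps power2_eq_square\<close>)
  have hR7: "ev N d3 (P*s^2/x) (P*s^2/y) = (RA a P (P*s^2/y) (P*s^2/x)) * ev N c (P*P*s^2/x) (s^2/y) + (RB bm P (P*s^2/y) (P*s^2/x)) * ev N c (P*s^2/y) (P*s^2/x)"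
    unfolding d3_def by (rule E21m) (use G' P0 s0 in \<open>simp_all add: field_simps power2_eq_square\<close>)
  have hR8: "ev N d3 (P*s^2/x) (y*P) = (RA a P (y*P) (P*s^2/x)) * ev N c (P*P*s^2/x) y + (RB bm P (y*P) (P*s^2/x)) * ev N c (y*P) (P*s^2/x)"
    unfolding d3_def by (rule E21m) (use G' P0 s0 in \<open>simp_all add: field_simps power2_eq_square\<close>)
  have hR9: "ev N d3 (s^2/y) x = (RA a P x (s^2/y)) * ev N c (P*s^2/y) (x/P) + (RB bm P x (s^2/y)) * ev N c x (s^2/y)"
    unfolding d3_def by (rule E21m) (use G' P0 s0 in \<open>simp_all add: field_simps power2_eq_square\<close>)
  have hR10: "ev N d3 y x = (RA a P x y) * ev N c (y*P) (x/P) + (RB bm P x y) * ev N c x y"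
    unfolding d3_def by (rule E21m) (use G' P0 s0 in \<open>simp_all add: field_simps power2_eq_square\<close>)
  have hR11: "ev N d3 (x/P) (P*s^2/y) = (RA a P (P*s^2/y) (x/P)) * ev N c x (s^2/y) + (RB bm P (P*s^2/y) (x/P)) * ev N c (P*s^2/y) (x/P)"
    unfolding d3_def by (rule E21m) (use G' P0 s0 in \<open>simp_all add: field_simps power2_eq_square\<close>)
  have hR12: "ev N d3 (x/P) (y*P) = (RA a P (y*P) (x/P)) * ev N c x y + (RB bm P (y*P) (x/P)) * ev N c (y*P) (x/P)"
    unfolding d3_def by (rule E21m) (use G' P0 s0 in \<open>simp_all add: field_simps power2_eq_square\<close>)
  have LL: "ev N (act N R1m c1) x y = ((RA a P x y)*(KC al s (x/P))*(RA a P (y*P) (x/P))*(KC am s y) + (RB bm P x y)*(KC al s y)*(RB bp P x y)*(KC am s y) + (RB bm P x y)*(KD be s n y)*(RB bp P x (s^2/y))*(KD be s n (s^2/y))) * ev N c x y + ((RA a P x y)*(KC al s (x/P))*(RA a P (y*P) (x/P))*(KD be s n y) + (RB bm P x y)*(KC al s y)*(RB bp P x y)*(KD be s n y) + (RB bm P x y)*(KD be s n y)*(RB bp P x (s^2/y))*(KC am s (s^2/y))) * ev N c x (s^2/y) + ((RA a P x y)*(KC al s (x/P))*(RB bp P (y*P) (x/P))*(KC am s (x/P)) + (RA a P x y)*(KD be s n (x/P))*(RB bp P (y*P) (P*s^2/x))*(KD be s n (P*s^2/x)) + (RB bm P x y)*(KC al s y)*(RA a P x y)*(KC am s (x/P)))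 * ev N c (y*P) (x/P) + ((RA a P x y)*(KC al s (x/P))*(RB bp P (y*P) (x/P))*(KD be s n (x/P)) + (RA a P x y)*(KD be s n (x/P))*(RB bp P (y*P) (P*s^2/x))*(KC am s (P*s^2/x)) + (RB bm P x y)*(KC al s y)*(RA a P x y)*(KD be s n (x/P))) * ev N c (y*P) (P*s^2/x) + ((RA a P x y)*(KD be s n (x/P))*(RA a P (y*P) (P*s^2/x))*(KC am s y)) * ev N c (P*P*s^2/x) y + ((RA a P x y)*(KD be s n (x/P))*(RA a P (y*P) (P*s^2/x))*(KD be s n y)) * ev N c (P*P*s^2/x) (s^2/y) + ((RB bm P x y)*(KD be s n y)*(RA a P x (s^2/y))*(KC am s (x/P))) * ev N c (P*s^2/y) (x/P) + ((RB bm P x y)*(KD be s n y)*(RA a P x (s^2/y))*(KD be s n (x/P))) * ev N c (P*s^2/y) (P*s^2/x)"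
    unfolding hL0 hL1 hL2 hL3 hL4 hL5 hL6 hL7 hL8 hL9 hL10 hL11 hL12 by (simp add: algebra_simps)
  have RR: "ev N (act N K2m d1) x y = ((KC am s y)*(RA a P x y)*(KC al s (x/P))*(RA a P (y*P) (x/P)) + (KC am s y)*(RB bp P x y)*(KC al s y)*(RB bm P x y) + (KD be s n y)*(RB bp P x (s^2/y))*(KD be s n (s^2/y))*(RB bm P x y)) * ev N c x y + ((KC am s y)*(RB bp P x y)*(KD be s n y)*(RB bm P x (s^2/y)) + (KD be s n y)*(RA a P x (s^2/y))*(KC al s (x/P))*(RA a P (P*s^2/y) (x/P)) + (KD be s n y)*(RB bp P x (s^2/y))*(KC al s (s^2/y))*(RB bm P x (s^2/y))) * ev N c x (s^2/y) + ((KC am s y)*(RA a P x y)*(KC al s (x/P))*(RB bm P (y*P) (x/P)) + (KC am s y)*(RB bp P x y)*(KC al s y)*(RA a P x y) + (KD be s n y)*(RB bp P x (s^2/y))*(KD be s n (s^2/y))*(RA a P x y)) * ev N c (y*P) (x/P) + ((KC am s y)*(RA a P x y)*(KD be s n (x/P))*(RB bm P (y*P) (P*s^2/x))) * ev N c (y*P) (P*s^2/x) + ((KC am s y)*(RA a P x y)*(KD be s n (x/P))*(RA a P (y*P) (P*s^2/x))) * ev N c (P*P*s^2/x) y + ((KD be s n y)*(RA a P x (s^2/y))*(KD be s n (x/P))*(RA a P (P*s^2/y) (P*s^2/x))) * ev N c (P*P*s^2/x) (s^2/y) + ((KC am s y)*(RB bp P x y)*(KD be s n y)*(RA a P x (s^2/y))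 + (KD be s n y)*(RA a P x (s^2/y))*(KC al s (x/P))*(RB bm P (P*s^2/y) (x/P)) + (KD be s n y)*(RB bp P x (s^2/y))*(KC al s (s^2/y))*(RA a P x (s^2/y))) * ev N c (P*s^2/y) (x/P) + ((KD be s n y)*(RA a P x (s^2/y))*(KD be s n (x/P))*(RB bm P (P*s^2/y) (P*s^2/x))) * ev N c (P*s^2/y) (P*s^2/x)"
    unfolding hR0 hR1 hR2 hR3 hR4 hR5 hR6 hR7 hR8 hR9 hR10 hR11 hR12 by (simp add: algebra_simps)
  have GG: "P \<noteq> 0" "s \<noteq> 0" "x \<noteq> 0" "y \<noteq> 0" "x \<noteq> P*s" "y \<noteq> s" "x \<noteq> P*y" "x*y \<noteq> P*s^2"
    using G' P0 s0 by simp_all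
  have ZB: "bm = Z2/(Z1-Z2)" "bp = 1/(Z1*Z2-1)" "al = -1/(Z1^2-1)" "am = -1/(Z2^2-1)"
    using ZF(5-8) by (simp_all add: bm_def bp_def al_def am_def)
  have "ev N (act N R1m c1) x y = ev N (act N K2m d1) x y"
    unfolding LL RR coef1[OF GG ZF(1-4) ZB] coef2[OF GG ZF(1-4) ZB] coef3[OF GG ZF(1-4) ZB] coef4[OF GG ZF(1-4) ZB] coef5[OF GG ZF(1-4) ZB] coef6[OF GG ZF(1-4) ZB] coef7[OF GG ZF(1-4) ZB] coef8[OF GG ZF(1-4) ZB] ..
  then show ?thesis
    by (simp add: act_comp c1_def c2_def c3_def d1_def d2_def d3_def R1m_def R1p_def R21m_def R21p_def K1l_def K2m_def)
qed

lemma zeta_diff: "zeta (a - b) = zeta a / zeta b"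
  unfolding zeta_def by (simp add: right_diff_distrib exp_diff)

lemma zeta_add: "zeta (a + b) = zeta a * zeta b"
  unfolding zeta_def by (simp add: distrib_left exp_add)

lemma zeta_nz: "zeta a \<noteq> 0" unfolding zeta_def by simp

lemma act_ind:
  assumes "i < N" "j < N"
  shows "act N M (\<lambda>a b. if a = i \<and> b = j then 1 else 0) k l = M i j k l"
  unfolding act_def using ind_sum[OF assms, of "\<lambda>a b. M a b k l"] by simp

theorem mainTheorem5:
  fixes N :: nat and q p r s lam mu :: complex
  assumes "N \<ge> 1"
    and "q \<noteq> 0" and "p \<noteq> 0" and "r \<noteq> 0" and "s \<noteq> 0"
    and "q^2 \<noteq> 1" and "r^2 \<noteq> 1"
    and "zeta (lam - mu) - inverse (zeta (lam - mu)) \<noteq> 0"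
    and "zeta (lam + mu) - inverse (zeta (lam + mu)) \<noteq> 0"
    and "(zeta lam)^2 - inverse ((zeta lam)^2) \<noteq> 0"
    and "(zeta mu)^2 - inverse ((zeta mu)^2) \<noteq> 0"
  shows "\<forall>i<N. \<forall>j<N. \<forall>k<N. \<forall>l<N.
    op_comp N (CG_R q p (lam - mu))
      (op_comp N (op1 (CG_K N r s lam))
        (op_comp N (op21 (CG_R q p (lam + mu))) (op2 (CG_K N r s mu)))) i j k l
  = op_comp N (op2 (CG_K N r s mu))
      (op_comp N (CG_R q p (lam + mu))
        (op_comp N (op1 (CG_K N r s lam)) (op21 (CG_R q p (lam - mu))))) i j k l"
proof (intro allI impI)
  fix i j k l assume ij: "i < N" "j < N" and kl: "k < N" "l < N"
  define LOP where "LOP = op_comp N (CG_R q p (lam - mu))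
      (op_comp N (op1 (CG_K N r s lam))
        (op_comp N (op21 (CG_R q p (lam + mu))) (op2 (CG_K N r s mu))))"
  define ROP where "ROP = op_comp N (op2 (CG_K N r s mu))
      (op_comp N (CG_R q p (lam + mu))
        (op_comp N (op1 (CG_K N r s lam)) (op21 (CG_R q p (lam - mu)))))"
  define c where "c = (\<lambda>a b. if a = i \<and> b = j then 1 else (0::complex))"
  define z1 where "z1 = zeta lam"
  define z2 where "z2 = zeta mu"
  define Z1 where "Z1 = z1^2"
  define Z2 where "Z2 = z2^2"
  have z0: "z1 \<noteq> 0" "z2 \<noteq> 0" by (simp_all add: z1_def z2_def zeta_nz)
  have zm: "zeta (lam - mu) = z1/z2" and zp: "zeta (lam + mu) = z1*z2"
    by (simp_all add: z1_def z2_def zeta_diff zeta_add)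
  have q1: "q - inverse q \<noteq> 0"
  proof
    assume "q - inverse q = 0"
    then have "q * q = 1" using assms(2) by (simp add: field_simps)
    then show False using assms(6) by (simp add: power2_eq_square)
  qed
  have r1: "r - inverse r \<noteq> 0"
  proof
    assume "r - inverse r = 0"
    then have "r * r = 1" using assms(4) by (simp add: field_simps)
    then show False using assms(7) by (simp add: power2_eq_square)
  qed
  have ZF1: "Z1 - Z2 \<noteq> 0"
  proof
    assume "Z1 - Z2 = 0"
    then have "z1^2 = z2^2" by (simp add: Z1_def Z2_def)
    then have "z1/z2 - inverse (z1/z2) = 0" using z0 by (simp add: field_simps power2_eq_square)
    then show False using assms(8) zm by simp
  qed
  have ZF2: "Z1*Z2 - 1 \<noteq> 0"
  proof
    assume "Z1*Z2 - 1 = 0"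
    then have "(z1*z2)*(z1*z2) = 1" by (simp add: Z1_def Z2_def power2_eq_square algebra_simps)
    then have "z1*z2 - inverse (z1*z2) = 0" using z0 by (simp add: field_simps)
    then show False using assms(9) zp by simp
  qed
  have ZF3: "Z1^2 - 1 \<noteq> 0"
  proof
    assume "Z1^2 - 1 = 0"
    then have "z1^2 * z1^2 = 1" by (simp add: Z1_def power2_eq_square algebra_simps)
    then have "z1^2 - inverse (z1^2) = 0" using z0 by (simp add: field_simps)
    then show False using assms(10) by (simp add: z1_def)
  qed
  have ZF4: "Z2^2 - 1 \<noteq> 0"
  proof
    assume "Z2^2 - 1 = 0"
    then have "z2^2 * z2^2 = 1" by (simp add: Z2_def power2_eq_square algebra_simps)
    then have "z2^2 - inverse (z2^2) = 0" using z0 by (simp add: field_simps)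
    then show False using assms(11) by (simp add: z2_def)
  qed
  have B1: "bz (zeta (lam - mu)) = Z2/(Z1-Z2)"
    unfolding bz_def zm Z1_def Z2_def using z0 ZF1[unfolded Z1_def Z2_def]
    by (simp add: divide_simps, (simp add: algebra_simps power2_eq_square)?)
  have B2: "bz (zeta (lam + mu)) = 1/(Z1*Z2-1)"
    unfolding bz_def zp Z1_def Z2_def using z0 ZF2[unfolded Z1_def Z2_def]
    by (simp add: divide_simps, (simp add: algebra_simps power2_eq_square)?)
  have B3: "alK (zeta lam) = -1/(Z1^2-1)"
    unfolding alK_def z1_def[symmetric] Z1_def using z0 ZF3[unfolded Z1_def]
    by (simp add: divide_simps, (simp add: algebra_simps power2_eq_square)?)
  have B4: "alK (zeta mu) = -1/(Z2^2-1)"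
    unfolding alK_def z2_def[symmetric] Z2_def using z0 ZF4[unfolded Z2_def]
    by (simp add: divide_simps, (simp add: algebra_simps power2_eq_square)?)
  note MP = main_point[OF assms(2,3,4,5) q1 r1 assms(8-11) ZF1 ZF2 ZF3 ZF4 B1 B2 B3 B4]
  define d where "d = (\<lambda>k l. act N LOP c k l - act N ROP c k l)"
  have evd: "ev N d x y = ev N (act N LOP c) x y - ev N (act N ROP c) x y" for x y
    by (simp add: d_def ev_def sum_subtractf algebra_simps)
  have "\<forall>k<N. \<forall>l<N. d k l = 0"
  proof (rule ev_zero_generic[where Yb="{0, s}"])
    fix y :: complex assume y: "y \<notin> {0, s}"
    show "\<exists>Xb. finite Xb \<and> (\<forall>x. x \<notin> Xb \<longrightarrow> ev N d x y = 0)"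
    proof (intro exI conjI allI impI)
      show "finite {0, p^2*s, p^2*y, p^2*s^2/y}" by simp
      fix x assume x: "x \<notin> {0, p^2*s, p^2*y, p^2*s^2/y}"
      have xy: "x*y \<noteq> p^2*s^2"
      proof
        assume "x*y = p^2*s^2"
        then have "x = p^2*s^2/y" using y by (simp add: field_simps)
        then show False using x by simp
      qed
      have "ev N (act N LOP c) x y = ev N (act N ROP c) x y"
        unfolding LOP_def ROP_def by (rule MP) (use x y xy in auto)
      then show "ev N d x y = 0" by (simp add: evd)
    qed
  qed simp
  then have "d k l = 0" using kl by blast
  then have "act N LOP c k l = act N ROP c k l" by (simp add: d_def)
  then show "LOP i j k l = ROP i j k l" unfolding c_def using act_ind[OF ij] by simp
qed

end
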